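(* Let $q>2$ be a prime power and let $M$ be a simple $GF(q)$-representable matroid of rank $r\geq 3$. Suppose that $M\not\cong PG(r-1,q)$ but that $\operatorname{si}(M/e)\cong PG(r-2,q)$ for all $e\in E(M)$. Then $M$ has a member of $\mathcal{N}=\{U_{2,k}:3\leq k\leq q\}\cup\{U_{3,q+2}\}$ as an induced minor.
   Context: $\operatorname{si}$ denotes simplification; every contraction is followed by simplification. An induced minor of $M$ is a matroid obtained from $M$ by a sequence of restrictions to flats and contractions (each followed by simplification). *)

theory Defs
  imports Main
begin

text \<open>Matroids are given by a finite ground set and a rank function
  (only its values on subsets of the ground set matter).\<close>

type_synonym 'a matroid = "'a set \<times> ('a set \<Rightarrow> nat)"

definition gnd :: "'a matroid \<Rightarrow> 'a set" where "gnd M = fst M"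
definition rk :: "'a matroid \<Rightarrow> 'a set \<Rightarrow> nat" where "rk M = snd M"

definition matroid :: "'a matroid \<Rightarrow> bool" where
  "matroid M \<longleftrightarrow> finite (gnd M) \<and>
     (\<forall>X \<subseteq> gnd M. rk M X \<le> card X) \<and>
     (\<forall>X Y. X \<subseteq> Y \<and> Y \<subseteq> gnd M \<longrightarrow> rk M X \<le> rk M Y) \<and>
     (\<forall>X Y. X \<subseteq> gnd M \<and> Y \<subseteq> gnd M \<longrightarrow>
        rk M (X \<union> Y) + rk M (X \<inter> Y) \<le> rk M X + rk M Y)"

definition simple :: "'a matroid \<Rightarrow> bool" where
  "simple M \<longleftrightarrow> (\<forall>e \<in> gnd M. rk M {e} = 1) \<and>
     (\<forall>e \<in> gnd M. \<forall>f \<in> gnd M. e \<noteq> f \<longrightarrow> rk M {e, f} = 2)"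

definition matroid_rank :: "'a matroid \<Rightarrow> nat" where
  "matroid_rank M = rk M (gnd M)"

definition is_flat :: "'a matroid \<Rightarrow> 'a set \<Rightarrow> bool" where
  "is_flat M F \<longleftrightarrow> F \<subseteq> gnd M \<and> (\<forall>e \<in> gnd M - F. rk M (insert e F) > rk M F)"

definition restrict :: "'a matroid \<Rightarrow> 'a set \<Rightarrow> 'a matroid" where
  "restrict M X = (X, rk M)"

definition contract :: "'a matroid \<Rightarrow> 'a set \<Rightarrow> 'a matroid" where
  "contract M C = (gnd M - C, \<lambda>X. rk M (X \<union> C) - rk M C)"

text \<open>S is the ground set of a simplification of M: it consists of non-loops and
  contains exactly one element of every parallel class (rank-1 flat's non-loops).
  The simplification is then restrict M S (well defined up to isomorphism).\<close>
definition is_simplification_set :: "'a matroid \<Rightarrow> 'a set \<Rightarrow> bool" where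
  "is_simplification_set M S \<longleftrightarrow> S \<subseteq> {e \<in> gnd M. rk M {e} = 1} \<and>
     (\<forall>e \<in> gnd M. rk M {e} = 1 \<longrightarrow> (\<exists>!f. f \<in> S \<and> rk M {e, f} = 1))"

definition iso :: "'a matroid \<Rightarrow> 'b matroid \<Rightarrow> bool" where
  "iso M N \<longleftrightarrow> (\<exists>f. bij_betw f (gnd M) (gnd N) \<and>
      (\<forall>X \<subseteq> gnd M. rk N (f ` X) = rk M X))"

inductive induced_minor :: "'a matroid \<Rightarrow> 'a matroid \<Rightarrow> bool" where
  refl: "induced_minor M M"
| flat: "induced_minor M N \<Longrightarrow> is_flat N F \<Longrightarrow> induced_minor M (restrict N F)"
| contr: "induced_minor M N \<Longrightarrow> C \<subseteq> gnd N \<Longrightarrow> is_simplification_set (contract N C) S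
           \<Longrightarrow> induced_minor M (restrict (contract N C) S)"

definition lin_indep :: "(nat \<Rightarrow> 'f::field) set \<Rightarrow> bool" where
  "lin_indep S \<longleftrightarrow> finite S \<and> (\<forall>c. (\<forall>i. (\<Sum>v\<in>S. c v * v i) = 0) \<longrightarrow> (\<forall>v\<in>S. c v = 0))"

definition vrank :: "('a \<Rightarrow> (nat \<Rightarrow> 'f::field)) \<Rightarrow> 'a set \<Rightarrow> nat" where
  "vrank \<phi> X = Max {card Y | Y. Y \<subseteq> X \<and> finite Y \<and> inj_on \<phi> Y \<and> lin_indep (\<phi> ` Y)}"

definition representable_over :: "'f::field itself \<Rightarrow> 'a matroid \<Rightarrow> bool" where
  "representable_over TYPE('f) M \<longleftrightarrow>
     (\<exists>\<phi> :: 'a \<Rightarrow> (nat \<Rightarrow> 'f). \<forall>X \<subseteq> gnd M. rk M X = vrank \<phi> X)"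

text \<open>PG(n, F): points are the 1-dimensional subspaces of F^(n+1), represented by
  the nonzero vectors supported on coordinates 0..n whose first nonzero entry is 1.\<close>
definition PG :: "nat \<Rightarrow> 'f::field itself \<Rightarrow> (nat \<Rightarrow> 'f) matroid" where
  "PG n TYPE('f) = ({v :: nat \<Rightarrow> 'f. (\<forall>i. n < i \<longrightarrow> v i = 0) \<and> (\<exists>i. v i \<noteq> 0) \<and>
                       v (LEAST i. v i \<noteq> 0) = 1}, vrank id)"

definition uniform :: "nat \<Rightarrow> nat \<Rightarrow> nat matroid" where
  "uniform k n = ({0..<n}, \<lambda>X. min k (card X))"

end

theory Submission
  imports Defs "HOL.Vector_Spaces" "HOL-Library.Function_Algebras"
begin

definition sc :: "'f::field \<Rightarrow> (nat \<Rightarrow> 'f) \<Rightarrow> (nat \<Rightarrow> 'f)" where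
  "sc c v = (\<lambda>i. c * v i)"

lemma sc_apply[simp]: "sc c v i = c * v i" by (simp add: sc_def)

interpretation V: vector_space "sc :: 'f::field \<Rightarrow> (nat \<Rightarrow> 'f) \<Rightarrow> (nat \<Rightarrow> 'f)"
  by unfold_locales (auto simp: sc_def fun_eq_iff algebra_simps)

lemma sum_fun_apply: "(\<Sum>x\<in>A. f x) (i::nat) = (\<Sum>x\<in>A. f x i)"
  by (induction A rule: infinite_finite_induct) auto

lemma lin_indep_iff: "lin_indep (S :: (nat \<Rightarrow> 'f::field) set) \<longleftrightarrow> finite S \<and> V.independent S"
proof (cases "finite S")
  case True
  have "(\<forall>c. (\<forall>i. (\<Sum>v\<in>S. c v * v i) = 0) \<longrightarrow> (\<forall>v\<in>S. c v = 0)) \<longleftrightarrow>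
        \<not> (\<exists>u. (\<exists>v \<in> S. u v \<noteq> 0) \<and> (\<Sum>v\<in>S. sc (u v) v) = 0)"
    by (auto simp: fun_eq_iff sum_fun_apply)
  then show ?thesis using True V.dependent_finite[OF True] by (simp add: lin_indep_def)
qed (simp add: lin_indep_def)

lemma card_option_UNIV: "card (UNIV :: 'f::finite option set) = Suc (card (UNIV :: 'f set))"
proof -
  have "card (insert None (range Some) :: 'f option set) = Suc (card (range (Some :: 'f \<Rightarrow> _)))"
    by (subst card_insert_disjoint) auto
  also have "card (range (Some :: 'f \<Rightarrow> _)) = card (UNIV :: 'f set)"
    by (rule card_image) (simp add: inj_on_def)
  finally show ?thesis by (simp add: UNIV_option_conv)
qed

section \<open>vrank\<close>

lemma vrank_set_finite:
  assumes "finite X"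
  shows "finite {card Y | Y. Y \<subseteq> X \<and> finite Y \<and> inj_on \<phi> Y \<and> lin_indep (\<phi> ` Y)}"
proof -
  have "{card Y | Y. Y \<subseteq> X \<and> finite Y \<and> inj_on \<phi> Y \<and> lin_indep (\<phi> ` Y)} \<subseteq> {..card X}"
    using assms by (auto intro: card_mono)
  then show ?thesis using finite_subset by blast
qed

lemma vrank_ge:
  fixes \<phi> :: "'a \<Rightarrow> nat \<Rightarrow> 'f::field"
  assumes "finite X" "Y \<subseteq> X" "inj_on \<phi> Y" "V.independent (\<phi> ` Y)"
  shows "card Y \<le> vrank \<phi> X"
proof -
  have "finite Y" using assms(1,2) finite_subset by blast
  then show ?thesis unfolding vrank_def
    by (intro Max_ge[OF vrank_set_finite[OF assms(1)]] CollectI exI[of _ Y])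
       (use assms in \<open>auto simp: lin_indep_iff\<close>)
qed

lemma vrank_obtain:
  fixes \<phi> :: "'a \<Rightarrow> nat \<Rightarrow> 'f::field"
  assumes "finite X"
  obtains Y where "Y \<subseteq> X" "inj_on \<phi> Y" "V.independent (\<phi> ` Y)" "card Y = vrank \<phi> X"
proof -
  have ne: "{card Y | Y. Y \<subseteq> X \<and> finite Y \<and> inj_on \<phi> Y \<and> lin_indep (\<phi> ` Y)} \<noteq> {}"
  proof -
    have "0 \<in> {card Y | Y. Y \<subseteq> X \<and> finite Y \<and> inj_on \<phi> Y \<and> lin_indep (\<phi> ` Y)}"
      by (intro CollectI exI[of _ "{}"]) (auto simp: lin_indep_def)
    then show ?thesis by blast
  qed
  from Max_in[OF vrank_set_finite[OF assms] ne] show ?thesis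
    unfolding vrank_def[symmetric] using that by (auto simp: lin_indep_iff)
qed

lemma vrank_le_span:
  fixes \<phi> :: "'a \<Rightarrow> nat \<Rightarrow> 'f::field"
  assumes "finite X" "\<phi> ` X \<subseteq> V.span T" "finite T"
  shows "vrank \<phi> X \<le> card T"
proof -
  obtain Y where Y: "Y \<subseteq> X" "inj_on \<phi> Y" "V.independent (\<phi> ` Y)" "card Y = vrank \<phi> X"
    using vrank_obtain[OF assms(1)] by blast
  have "card (\<phi> ` Y) \<le> card T"
    using V.independent_span_bound[OF assms(3) Y(3)] Y(1) assms(2) by auto
  then show ?thesis using Y card_image by metis
qed

lemma vrank_le_card:
  fixes \<phi> :: "'a \<Rightarrow> nat \<Rightarrow> 'f::field"
  assumes "finite X" shows "vrank \<phi> X \<le> card X"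
proof -
  obtain Y where Y: "Y \<subseteq> X" "card Y = vrank \<phi> X"
    using vrank_obtain[OF assms] by metis
  then show ?thesis using card_mono[OF assms] by metis
qed

lemma vrank_mono:
  fixes \<phi> :: "'a \<Rightarrow> nat \<Rightarrow> 'f::field"
  assumes "finite X" "Z \<subseteq> X" shows "vrank \<phi> Z \<le> vrank \<phi> X"
proof -
  obtain Y where Y: "Y \<subseteq> Z" "inj_on \<phi> Y" "V.independent (\<phi> ` Y)" "card Y = vrank \<phi> Z"
    using vrank_obtain[OF finite_subset[OF assms(2,1)]] by blast
  then show ?thesis using vrank_ge[OF assms(1), of Y \<phi>] assms(2) by auto
qed

section \<open>Two-dimensional spans and the class map\<close>

lemma span2_iff:
  "v \<in> V.span {a, b} \<longleftrightarrow> (\<exists>\<alpha> \<beta>. v = sc \<alpha> a + sc \<beta> (b :: nat \<Rightarrow> 'f::field))"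
proof
  assume "v \<in> V.span {a, b}"
  then obtain k where "v - sc k a \<in> V.span {b}" using V.span_breakdown_eq by blast
  then obtain m where "v - sc k a = sc m b" using V.span_singleton by blast
  then show "\<exists>\<alpha> \<beta>. v = sc \<alpha> a + sc \<beta> b" by (metis diff_eq_eq add.commute)
next
  assume "\<exists>\<alpha> \<beta>. v = sc \<alpha> a + sc \<beta> b"
  then obtain \<alpha> \<beta> where v: "v = sc \<alpha> a + sc \<beta> b" by blast
  have "a \<in> V.span {a, b}" "b \<in> V.span {a, b}" by (auto intro: V.span_base)
  then show "v \<in> V.span {a, b}" unfolding v by (intro V.span_add V.span_scale)
qed

lemma indep2_iff:
  "V.independent {a, b :: nat \<Rightarrow> 'f::field} \<and> a \<noteq> b \<longleftrightarrow> b \<noteq> 0 \<and> a \<notin> V.span {b}"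
proof (cases "a = b")
  case True
  have "b \<in> V.span {b}" by (rule V.span_base) simp
  then show ?thesis using True by auto
qed (auto simp: V.independent_insert V.span_singleton)

lemma indep2_uniq:
  fixes a b :: "nat \<Rightarrow> 'f::field"
  assumes "V.independent {a, b}" "a \<noteq> b" "sc \<alpha> a + sc \<beta> b = sc \<alpha>' a + sc \<beta>' b"
  shows "\<alpha> = \<alpha>' \<and> \<beta> = \<beta>'"
proof -
  define u where "u = (\<lambda>v. if v = a then \<alpha> - \<alpha>' else \<beta> - \<beta>')"
  have "(\<Sum>v\<in>{a,b}. sc (u v) v) = sc (\<alpha> - \<alpha>') a + sc (\<beta> - \<beta>') b"
    using assms(2) by (simp add: u_def)
  also have "\<dots> = 0" using assms(3)
    by (simp add: fun_eq_iff algebra_simps)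
  finally have s: "(\<Sum>v\<in>{a,b}. sc (u v) v) = 0" .
  have fin: "finite {a,b}" by simp
  have "\<not> (\<exists>v\<in>{a,b}. u v \<noteq> 0)"
  proof
    assume "\<exists>v\<in>{a,b}. u v \<noteq> 0"
    then have "V.dependent {a,b}"
      unfolding V.dependent_finite[OF fin] using s by blast
    then show False using assms(1) by simp
  qed
  then have "u a = 0" "u b = 0" by auto
  then show ?thesis using assms(2) by (simp add: u_def)
qed

lemma sc_in_span1: "sc c w \<in> V.span {w}"
  unfolding V.span_singleton by (rule rangeI)

definition coef :: "(nat \<Rightarrow> 'f::field) \<Rightarrow> (nat \<Rightarrow> 'f) \<Rightarrow> (nat \<Rightarrow> 'f) \<Rightarrow> 'f \<times> 'f" where
  "coef a b v = (THE p. v = sc (fst p) a + sc (snd p) b)"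

definition cls :: "(nat \<Rightarrow> 'f::field) \<Rightarrow> (nat \<Rightarrow> 'f) \<Rightarrow> (nat \<Rightarrow> 'f) \<Rightarrow> 'f option" where
  "cls a b v = (if fst (coef a b v) = 0 then None else Some (snd (coef a b v) / fst (coef a b v)))"

lemma coef_eq:
  fixes a b :: "nat \<Rightarrow> 'f::field"
  assumes "V.independent {a, b}" "a \<noteq> b"
  shows "coef a b (sc \<alpha> a + sc \<beta> b) = (\<alpha>, \<beta>)"
  unfolding coef_def
  by (rule the_equality) (use indep2_uniq[OF assms] in \<open>auto simp: prod_eq_iff\<close>)

lemma cls_eq:
  fixes a b :: "nat \<Rightarrow> 'f::field"
  assumes "V.independent {a, b}" "a \<noteq> b"
  shows "cls a b (sc \<alpha> a + sc \<beta> b) = (if \<alpha> = 0 then None else Some (\<beta> / \<alpha>))"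
  by (simp add: cls_def coef_eq[OF assms])

lemma cls_par:
  fixes a b :: "nat \<Rightarrow> 'f::field"
  assumes "V.independent {a, b}" "a \<noteq> b" "v \<in> V.span {a, b}" "w \<in> V.span {a, b}"
    "w \<noteq> 0" "cls a b v = cls a b w"
  shows "v \<in> V.span {w}"
proof -
  obtain \<alpha> \<beta> where v: "v = sc \<alpha> a + sc \<beta> b" using assms(3) span2_iff by blast
  obtain \<alpha>' \<beta>' where w: "w = sc \<alpha>' a + sc \<beta>' b" using assms(4) span2_iff by blast
  have c: "(if \<alpha> = 0 then None else Some (\<beta> / \<alpha>)) = (if \<alpha>' = 0 then None else Some (\<beta>' / \<alpha>'))"
    using assms(6) unfolding v w cls_eq[OF assms(1,2)] .
  show ?thesis
  proof (cases "\<alpha>' = 0")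
    case True
    then have "\<alpha> = 0" using c by (auto split: if_splits)
    have "\<beta>' \<noteq> 0" using True assms(5) w by (auto simp: fun_eq_iff)
    have "v = sc (\<beta> / \<beta>') w" using True \<open>\<alpha> = 0\<close> \<open>\<beta>' \<noteq> 0\<close> v w by (simp add: fun_eq_iff)
    then show ?thesis by (simp add: sc_in_span1)
  next
    case False
    then have a0: "\<alpha> \<noteq> 0" and q: "\<beta> / \<alpha> = \<beta>' / \<alpha>'" using c by (auto split: if_splits)
    have "\<beta> = \<alpha> * (\<beta>' / \<alpha>')" using q a0 by (simp add: field_simps)
    then have "v = sc (\<alpha> / \<alpha>') w" using False v w by (simp add: fun_eq_iff field_simps)
    then show ?thesis by (simp add: sc_in_span1)
  qed
qed

lemma cls_scale:
  fixes a b :: "nat \<Rightarrow> 'f::field"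
  assumes "V.independent {a, b}" "a \<noteq> b" "v \<in> V.span {a, b}" "c \<noteq> 0"
  shows "cls a b (sc c v) = cls a b v"
proof -
  obtain \<alpha> \<beta> where v: "v = sc \<alpha> a + sc \<beta> b" using assms(3) span2_iff by blast
  have "sc c v = sc (c * \<alpha>) a + sc (c * \<beta>) b" by (simp add: v fun_eq_iff algebra_simps)
  then show ?thesis using assms(4) by (simp add: v cls_eq[OF assms(1,2)])
qed

lemma cls_inj:
  fixes a b :: "nat \<Rightarrow> 'f::field"
  assumes "V.independent {a, b}" "a \<noteq> b" "Z \<subseteq> V.span {a, b}" "0 \<notin> Z"
    "\<And>z z'. z \<in> Z \<Longrightarrow> z' \<in> Z \<Longrightarrow> z \<noteq> z' \<Longrightarrow> z \<notin> V.span {z'}"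
  shows "inj_on (cls a b) Z"
  using assms cls_par[OF assms(1,2)] unfolding inj_on_def by blast

lemma line_bound:
  fixes a b :: "nat \<Rightarrow> 'f::{field,finite}"
  assumes "V.independent {a, b}" "a \<noteq> b" "Z \<subseteq> V.span {a, b}" "0 \<notin> Z"
    "\<And>z z'. z \<in> Z \<Longrightarrow> z' \<in> Z \<Longrightarrow> z \<noteq> z' \<Longrightarrow> z \<notin> V.span {z'}"
  shows "card Z \<le> Suc (card (UNIV :: 'f set))" and "finite Z"
proof -
  have "card Z \<le> card (UNIV :: 'f option set)"
    by (rule card_inj_on_le[OF cls_inj[OF assms]]) auto
  then show "card Z \<le> Suc (card (UNIV :: 'f set))" by (simp add: card_option_UNIV)
  have "finite (cls a b ` Z)" by simp
  then show "finite Z" by (rule finite_imageD[OF _ cls_inj[OF assms]])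
qed

lemma line_full:
  fixes a b :: "nat \<Rightarrow> 'f::{field,finite}"
  assumes "V.independent {a, b}" "a \<noteq> b" "Z \<subseteq> V.span {a, b}" "0 \<notin> Z"
    "\<And>z z'. z \<in> Z \<Longrightarrow> z' \<in> Z \<Longrightarrow> z \<noteq> z' \<Longrightarrow> z \<notin> V.span {z'}"
    "card Z \<ge> Suc (card (UNIV :: 'f set))"
    "v \<in> V.span {a, b}" "v \<noteq> 0"
  shows "\<exists>z\<in>Z. v \<in> V.span {z}"
proof -
  have inj: "inj_on (cls a b) Z" by (rule cls_inj[OF assms(1-5)])
  have fin: "finite Z" using line_bound[OF assms(1-5)] by blast
  have "card (cls a b ` Z) = card (UNIV :: 'f option set)"
    using card_image[OF inj] assms(6) line_bound[OF assms(1-5)] by (simp add: card_option_UNIV)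
  then have "cls a b ` Z = UNIV" by (metis card_subset_eq finite_UNIV subset_UNIV)
  then obtain z where z: "z \<in> Z" "cls a b z = cls a b v" by (metis UNIV_I imageE)
  have "v \<in> V.span {z}"
    by (rule cls_par[OF assms(1,2,7)]) (use z assms(3,4) in auto)
  then show ?thesis using z by blast
qed

section \<open>Normalisation and PG\<close>

definition lead :: "(nat \<Rightarrow> 'f::field) \<Rightarrow> nat" where
  "lead v = (LEAST i. v i \<noteq> 0)"

definition nz :: "(nat \<Rightarrow> 'f::field) \<Rightarrow> (nat \<Rightarrow> 'f)" where
  "nz v = sc (inverse (v (lead v))) v"

lemma nonzero_ex: "v \<noteq> 0 \<longleftrightarrow> (\<exists>i. v i \<noteq> (0::'f::field))"
  by (auto simp: fun_eq_iff)

lemma lead_nz: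
  fixes v :: "nat \<Rightarrow> 'f::field"
  assumes "v \<noteq> 0" shows "v (lead v) \<noteq> 0"
  using assms unfolding lead_def nonzero_ex by (metis (mono_tags) LeastI_ex)

lemma lead_sc:
  fixes v :: "nat \<Rightarrow> 'f::field"
  assumes "c \<noteq> 0" shows "lead (sc c v) = lead v"
  using assms by (simp add: lead_def)

lemma nz_sc:
  fixes v :: "nat \<Rightarrow> 'f::field"
  assumes "c \<noteq> 0" shows "nz (sc c v) = nz v"
proof (cases "v = 0")
  case True
  then have "sc c v = v" by (simp add: fun_eq_iff)
  then show ?thesis by simp
next
  case False
  then have "v (lead v) \<noteq> 0" by (rule lead_nz)
  then show ?thesis using assms by (simp add: nz_def lead_sc fun_eq_iff field_simps)
qed

lemma nz_nonzero:
  fixes v :: "nat \<Rightarrow> 'f::field"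
  assumes "v \<noteq> 0" shows "nz v \<noteq> 0" "lead (nz v) = lead v" "nz v (lead (nz v)) = 1"
proof -
  have l: "v (lead v) \<noteq> 0" by (rule lead_nz[OF assms])
  show "lead (nz v) = lead v" unfolding nz_def by (rule lead_sc) (use l in simp)
  then show "nz v (lead (nz v)) = 1" using l by (simp add: nz_def)
  then show "nz v \<noteq> 0" by auto
qed

lemma nz_fix:
  fixes w :: "nat \<Rightarrow> 'f::field"
  assumes "w (lead w) = 1" shows "nz w = w"
  using assms by (simp add: nz_def sc_def)

definition PGg :: "nat \<Rightarrow> (nat \<Rightarrow> 'f::field) set" where
  "PGg n = {v. (\<forall>i. n < i \<longrightarrow> v i = 0) \<and> (\<exists>i. v i \<noteq> 0) \<and> v (LEAST i. v i \<noteq> 0) = 1}"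

lemma PG_gnd: "gnd (PG n TYPE('f::field)) = PGg n"
  by (simp add: PG_def PGg_def gnd_def)

lemma PG_rk: "rk (PG n TYPE('f::field)) = vrank id"
  by (simp add: PG_def rk_def)

lemma PGg_iff:
  "v \<in> PGg n \<longleftrightarrow> (\<forall>i. n < i \<longrightarrow> v i = 0) \<and> v \<noteq> 0 \<and> v (lead v) = (1::'f::field)"
  by (simp add: PGg_def lead_def nonzero_ex)

lemma nz_PGg:
  fixes v :: "nat \<Rightarrow> 'f::field"
  assumes "v \<noteq> 0" "\<forall>i. n < i \<longrightarrow> v i = 0" shows "nz v \<in> PGg n"
  using nz_nonzero[OF assms(1)] assms(2) by (simp add: PGg_iff nz_def)

lemma PG_par:
  fixes u w :: "nat \<Rightarrow> 'f::field"
  assumes "u \<in> PGg n" "w \<in> PGg n" "u \<in> V.span {w}" shows "u = w"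
proof -
  obtain c where c: "u = sc c w" using assms(3) by (auto simp: V.span_singleton)
  have u0: "u \<noteq> 0" using assms(1) by (simp add: PGg_iff)
  then have "c \<noteq> 0" using c by (auto simp: fun_eq_iff)
  then have "lead u = lead w" using c lead_sc by simp
  then have "c = 1" using assms(1,2) c by (simp add: PGg_iff)
  then show ?thesis using c by (simp add: sc_def)
qed

lemma PG_indep:
  fixes u w :: "nat \<Rightarrow> 'f::field"
  assumes "u \<in> PGg n" "w \<in> PGg n" "u \<noteq> w" shows "V.independent {u, w}"
proof -
  have "w \<noteq> 0" using assms(2) by (simp add: PGg_iff)
  moreover have "u \<notin> V.span {w}" using PG_par[OF assms(1,2)] assms(3) by blast
  ultimately show ?thesis using indep2_iff by blast
qed

lemma PG_line_card:
  fixes u w :: "nat \<Rightarrow> 'f::{field,finite}"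
  assumes "u \<in> PGg n" "w \<in> PGg n" "u \<noteq> w"
  shows "card {z \<in> PGg n. z \<in> V.span {u, w}} = Suc (card (UNIV :: 'f set))"
proof -
  let ?Z = "{z \<in> PGg n. z \<in> V.span {u, w}}"
  have ind: "V.independent {u, w}" by (rule PG_indep[OF assms])
  have hyps: "?Z \<subseteq> V.span {u, w}" "0 \<notin> ?Z"
    "\<And>z z'. z \<in> ?Z \<Longrightarrow> z' \<in> ?Z \<Longrightarrow> z \<noteq> z' \<Longrightarrow> z \<notin> V.span {z'}"
    using PG_par by (auto simp: PGg_iff)
  note lb = line_bound[OF ind assms(3) hyps]
  define h where "h = (\<lambda>t. case t of None \<Rightarrow> w | Some s \<Rightarrow> nz (u + sc s w))"
  have ne: "u + sc s w \<noteq> 0" for s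
  proof
    assume "u + sc s w = 0"
    then have "u = sc (- s) w" by (simp add: fun_eq_iff add_eq_0_iff2)
    then have "u \<in> V.span {w}" by (simp only: sc_in_span1)
    then show False using PG_par[OF assms(1,2)] assms(3) by blast
  qed
  have uw: "u \<in> V.span {u, w}" "w \<in> V.span {u, w}" by (auto intro: V.span_base)
  have insp: "u + sc s w \<in> V.span {u, w}" for s
    by (intro V.span_add V.span_scale uw)
  have hZ: "h t \<in> ?Z" for t
  proof (cases t)
    case None then show ?thesis using assms(2) uw by (simp add: h_def)
  next
    case (Some s)
    have "\<forall>i. n < i \<longrightarrow> (u + sc s w) i = 0" using assms(1,2) by (simp add: PGg_iff)
    then have "nz (u + sc s w) \<in> PGg n" by (rule nz_PGg[OF ne])
    moreover have "nz (u + sc s w) \<in> V.span {u, w}"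
      unfolding nz_def by (intro V.span_scale insp)
    ultimately show ?thesis using Some by (simp add: h_def)
  qed
  have cls_h: "cls u w (h t) = t" for t
  proof (cases t)
    case None
    have "w = sc 0 u + sc 1 w" by (simp add: fun_eq_iff)
    then have "cls u w w = None" using cls_eq[OF ind assms(3), of 0 1] by simp
    then show ?thesis using None by (simp add: h_def)
  next
    case (Some s)
    have l: "(u + sc s w) (lead (u + sc s w)) \<noteq> 0" by (rule lead_nz[OF ne])
    have c1: "cls u w (nz (u + sc s w)) = cls u w (u + sc s w)"
      unfolding nz_def by (rule cls_scale[OF ind assms(3) insp]) (use l in simp)
    have e: "u + sc s w = sc 1 u + sc s w" by (simp add: fun_eq_iff)
    have c2: "cls u w (sc 1 u + sc s w) = Some s" using cls_eq[OF ind assms(3), of 1 s] by simp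
    have "h t = nz (u + sc s w)" using Some by (simp add: h_def)
    have c3: "cls u w (u + sc s w) = Some s" by (subst e) (rule c2)
    show ?thesis using c1 c3 \<open>h t = nz (u + sc s w)\<close> Some by simp
  qed
  have "inj h" by (metis cls_h injI)
  then have "card (UNIV :: 'f option set) \<le> card ?Z"
    by (rule card_inj_on_le) (use hZ lb(2) in auto)
  then show ?thesis using lb(1) by (simp add: card_option_UNIV)
qed

lemma vrank_two:
  fixes \<phi> :: "'a \<Rightarrow> nat \<Rightarrow> 'f::field"
  assumes "V.independent {\<phi> x, \<phi> y}" "\<phi> x \<noteq> \<phi> y" "\<phi> z \<in> V.span {\<phi> x, \<phi> y}"
  shows "vrank \<phi> {x, y, z} = 2"
proof (rule antisym)
  have "vrank \<phi> {x, y, z} \<le> card {\<phi> x, \<phi> y}"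
    by (rule vrank_le_span) (use assms(3) in \<open>auto intro: V.span_base\<close>)
  then show "vrank \<phi> {x, y, z} \<le> 2" using assms(2) by simp
  have "card {x, y} \<le> vrank \<phi> {x, y, z}"
    by (rule vrank_ge) (use assms(1,2) in auto)
  then show "2 \<le> vrank \<phi> {x, y, z}" using assms(2) by (cases "x = y") auto
qed

lemma vrank_three:
  fixes \<phi> :: "'a \<Rightarrow> nat \<Rightarrow> 'f::field"
  assumes "V.independent {\<phi> x, \<phi> y}" "\<phi> x \<noteq> \<phi> y" "\<phi> z \<notin> V.span {\<phi> x, \<phi> y}"
  shows "vrank \<phi> {x, y, z} = 3"
proof (rule antisym)
  have zx: "\<phi> z \<noteq> \<phi> x" "\<phi> z \<noteq> \<phi> y" using assms(3) by (auto intro: V.span_base)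
  then have d: "x \<noteq> y" "z \<noteq> x" "z \<noteq> y" using assms(2) by auto
  show "vrank \<phi> {x, y, z} \<le> 3" using vrank_le_card[of "{x,y,z}" \<phi>] d by simp
  have ind: "V.independent (insert (\<phi> z) {\<phi> x, \<phi> y})"
    by (rule V.independent_insertI[OF assms(3,1)])
  have "card {x, y, z} \<le> vrank \<phi> {x, y, z}"
    by (rule vrank_ge) (use ind zx assms(2) in \<open>auto simp: insert_commute\<close>)
  then show "3 \<le> vrank \<phi> {x, y, z}" using d by simp
qed

lemma span_eq_card:
  fixes A T :: "(nat \<Rightarrow> 'f::field) set"
  assumes "finite A" "finite T" "V.independent A" "A \<subseteq> V.span T" "card T \<le> card A"
  shows "V.span A = V.span T"
proof -
  have "T \<subseteq> V.span A"
  proof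
    fix t assume t: "t \<in> T"
    show "t \<in> V.span A"
    proof (rule ccontr)
      assume n: "t \<notin> V.span A"
      then have "t \<notin> A" using V.span_base by blast
      have "V.independent (insert t A)" by (rule V.independent_insertI[OF n assms(3)])
      moreover have "insert t A \<subseteq> V.span T" using assms(4) t V.span_base by blast
      ultimately have "card (insert t A) \<le> card T"
        using V.independent_span_bound[OF assms(2)] by blast
      then show False using \<open>t \<notin> A\<close> assms(1,5) by simp
    qed
  qed
  then show ?thesis using assms(4) V.span_eq by blast
qed

lemma vrank_basis:
  fixes \<phi> :: "'a \<Rightarrow> nat \<Rightarrow> 'f::field"
  assumes "finite X" "Y \<subseteq> X" "inj_on \<phi> Y" "V.independent (\<phi> ` Y)" "\<phi> ` X \<subseteq> V.span (\<phi> ` Y)"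
  shows "vrank \<phi> X = card Y"
proof (rule antisym)
  have "finite Y" using assms(1,2) finite_subset by blast
  have "vrank \<phi> X \<le> card (\<phi> ` Y)" by (rule vrank_le_span) (use assms \<open>finite Y\<close> in auto)
  then show "vrank \<phi> X \<le> card Y" using card_image[OF assms(3)] by simp
  show "card Y \<le> vrank \<phi> X" by (rule vrank_ge) (use assms in auto)
qed

lemma restr_gnd: "gnd (restrict N X) = X" by (simp add: restrict_def gnd_def)
lemma restr_rk: "rk (restrict N X) = rk N" by (simp add: restrict_def rk_def)

locale rep =
  fixes M :: "'a matroid" and \<phi> :: "'a \<Rightarrow> nat \<Rightarrow> 'f::{field,finite}"
  assumes finE: "finite (gnd M)"
    and rkE: "\<And>X. X \<subseteq> gnd M \<Longrightarrow> rk M X = vrank \<phi> X"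
    and nzE: "\<And>x. x \<in> gnd M \<Longrightarrow> \<phi> x \<noteq> 0"
    and pairE: "\<And>x y. x \<in> gnd M \<Longrightarrow> y \<in> gnd M \<Longrightarrow> x \<noteq> y \<Longrightarrow> \<phi> x \<notin> V.span {\<phi> y}"
begin

abbreviation "E \<equiv> gnd M"

definition Line :: "'a \<Rightarrow> 'a \<Rightarrow> 'a set" where
  "Line x y = {z \<in> E. \<phi> z \<in> V.span {\<phi> x, \<phi> y}}"

definition Plane :: "'a \<Rightarrow> 'a \<Rightarrow> 'a \<Rightarrow> 'a set" where
  "Plane x y z = {w \<in> E. \<phi> w \<in> V.span {\<phi> x, \<phi> y, \<phi> z}}"

definition LT :: "'a \<Rightarrow> 'a set \<Rightarrow> 'a set set" where
  "LT x P = (\<lambda>y. Line x y) ` (P - {x})"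

lemma inj_E: "inj_on \<phi> E"
proof (rule inj_onI)
  fix x y assume "x \<in> E" "y \<in> E" "\<phi> x = \<phi> y"
  then show "x = y" using pairE[of x y] V.span_base[of "\<phi> y" "{\<phi> y}"] by auto
qed

lemma ind2:
  assumes "x \<in> E" "y \<in> E" "x \<noteq> y"
  shows "V.independent {\<phi> x, \<phi> y}" "\<phi> x \<noteq> \<phi> y"
proof -
  show "\<phi> x \<noteq> \<phi> y" using inj_E assms by (auto dest: inj_onD)
  then show "V.independent {\<phi> x, \<phi> y}"
    using indep2_iff[of "\<phi> x" "\<phi> y"] pairE[OF assms] nzE[OF assms(2)] by blast
qed

lemma line_sub: "Line x y \<subseteq> E" by (auto simp: Line_def)
lemma plane_sub: "Plane x y z \<subseteq> E" by (auto simp: Plane_def)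

lemma line_mem:
  assumes "x \<in> E" "y \<in> E" shows "x \<in> Line x y" "y \<in> Line x y"
  using assms by (auto simp: Line_def intro: V.span_base)

lemma line_fin: "finite (Line x y)"
  using finE line_sub finite_subset by blast

lemma line_card:
  assumes "x \<in> E" "y \<in> E" "x \<noteq> y"
  shows "2 \<le> card (Line x y)" "card (Line x y) \<le> Suc (card (UNIV :: 'f set))"
proof -
  have "card {x, y} \<le> card (Line x y)"
    by (rule card_mono[OF line_fin]) (use line_mem[OF assms(1,2)] in auto)
  then show "2 \<le> card (Line x y)" using assms(3) by simp
  have "card (\<phi> ` Line x y) \<le> Suc (card (UNIV :: 'f set))"
  proof (rule line_bound(1)[OF ind2[OF assms]])
    show "\<phi> ` Line x y \<subseteq> V.span {\<phi> x, \<phi> y}" by (auto simp: Line_def)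
    show "0 \<notin> \<phi> ` Line x y" using nzE by (auto simp: Line_def)
    show "\<And>z z'. z \<in> \<phi> ` Line x y \<Longrightarrow> z' \<in> \<phi> ` Line x y \<Longrightarrow> z \<noteq> z' \<Longrightarrow> z \<notin> V.span {z'}"
      using pairE by (auto simp: Line_def)
  qed
  then show "card (Line x y) \<le> Suc (card (UNIV :: 'f set))"
    using card_image[OF inj_on_subset[OF inj_E line_sub]] by simp
qed

lemma span2_sub:
  fixes a b c d :: "nat \<Rightarrow> 'f"
  assumes "V.independent {a, b}" "a \<noteq> b" "V.independent {c, d}" "c \<noteq> d"
    "c \<in> V.span {a, b}" "d \<in> V.span {a, b}"
  shows "V.span {c, d} = V.span {a, b}"
  by (rule span_eq_card) (use assms in \<open>auto simp: card_insert_if\<close>)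

lemma line_eq:
  assumes "x \<in> E" "y \<in> E" "x \<noteq> y" "u \<in> Line x y" "v \<in> Line x y" "u \<noteq> v"
  shows "Line u v = Line x y"
proof -
  have uv: "u \<in> E" "v \<in> E" using assms(4,5) line_sub by auto
  have "V.span {\<phi> u, \<phi> v} = V.span {\<phi> x, \<phi> y}"
    by (rule span2_sub[OF ind2[OF assms(1-3)] ind2[OF uv assms(6)]])
       (use assms(4,5) in \<open>auto simp: Line_def\<close>)
  then show ?thesis by (simp add: Line_def)
qed

lemma line_eq2:
  assumes "x \<in> E" "y \<in> E" "x \<noteq> y" "v \<in> Line x y" "v \<noteq> x"
  shows "Line x v = Line x y"
  using line_eq[OF assms(1-3) line_mem(1)[OF assms(1,2)] assms(4)] assms(5) by simp

lemma vrank_line: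
  assumes "x \<in> E" "y \<in> E" "x \<noteq> y" "X \<subseteq> Line x y"
  shows "vrank \<phi> X = min 2 (card X)"
proof -
  have finX: "finite X" using assms(4) line_fin finite_subset by blast
  have XE: "X \<subseteq> E" using assms(4) line_sub by blast
  show ?thesis
  proof (cases "card X \<le> 1")
    case True
    then consider "card X = 0" | "card X = 1" by linarith
    then consider "X = {}" | u where "X = {u}"
      using finX by (metis card_0_eq card_1_singletonE)
    then show ?thesis
    proof cases
      case 1 then show ?thesis using vrank_le_card[of X \<phi>] by simp
    next
      case 2
      have "card {u} \<le> vrank \<phi> X"
        by (rule vrank_ge) (use 2 XE nzE in auto)
      moreover have "vrank \<phi> X \<le> card X" by (rule vrank_le_card[OF finX])
      ultimately show ?thesis using 2 by simp
    qed
  next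
    case False
    then obtain u v where uv: "u \<in> X" "v \<in> X" "u \<noteq> v"
      by (metis One_nat_def card.empty card_le_Suc0_iff_eq finX le_SucI nat_le_linear)
    have "card {u, v} \<le> vrank \<phi> X"
    proof (rule vrank_ge[OF finX])
      have "u \<in> E" "v \<in> E" using uv XE by auto
      then show "inj_on \<phi> {u, v}" "V.independent (\<phi> ` {u, v})"
        using ind2[of u v] uv(3) by auto
    qed (use uv in auto)
    moreover have "vrank \<phi> X \<le> card {\<phi> x, \<phi> y}"
      by (rule vrank_le_span[OF finX]) (use assms(4) in \<open>auto simp: Line_def\<close>)
    ultimately show ?thesis using uv False ind2(2)[OF assms(1-3)] by simp
  qed
qed

end

context rep
begin

lemma vrank_single: assumes "x \<in> E" shows "vrank \<phi> {x} = 1"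
  using vrank_basis[of "{x}" "{x}" \<phi>] nzE[OF assms] by (auto intro: V.span_base)

lemma vrank_pair: assumes "x \<in> E" "y \<in> E" "x \<noteq> y" shows "vrank \<phi> {x, y} = 2"
proof -
  have "vrank \<phi> {x, y} = card {x, y}"
    by (rule vrank_basis) (use ind2[OF assms] in \<open>auto intro: V.span_base\<close>)
  then show ?thesis using assms(3) by simp
qed

lemma vrank_xyz:
  assumes "x \<in> E" "y \<in> E" "x \<noteq> y" "z \<in> E"
  shows "vrank \<phi> {x, y, z} = (if z \<in> Line x y then 2 else 3)"
  using vrank_two[OF ind2[OF assms(1-3)]] vrank_three[OF ind2[OF assms(1-3)]] assms(4)
  by (auto simp: Line_def)

lemma vrank_wxyz:
  assumes "x \<in> E" "y \<in> E" "x \<noteq> y" "z \<in> E" "\<phi> z \<notin> V.span {\<phi> x, \<phi> y}" "w \<in> E"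
  shows "vrank \<phi> {x, y, z, w} = (if \<phi> w \<in> V.span {\<phi> x, \<phi> y, \<phi> z} then 3 else 4)"
proof -
  have i2: "V.independent {\<phi> x, \<phi> y}" "\<phi> x \<noteq> \<phi> y" using ind2[OF assms(1-3)] by auto
  have zz: "\<phi> z \<noteq> \<phi> x" "\<phi> z \<noteq> \<phi> y" using assms(5) by (auto intro: V.span_base)
  have i3: "V.independent {\<phi> x, \<phi> y, \<phi> z}"
    using V.independent_insertI[OF assms(5) i2(1)] by (simp add: insert_commute)
  have inj3: "inj_on \<phi> {x, y, z}" using i2(2) zz by auto
  have c3: "card {x, y, z} = 3" using i2(2) zz by (auto simp: card_insert_if)
  have fin: "finite {x, y, z, w}" by simp
  show ?thesis
  proof (cases "\<phi> w \<in> V.span {\<phi> x, \<phi> y, \<phi> z}")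
    case True
    have "vrank \<phi> {x, y, z, w} = card {x, y, z}"
      by (rule vrank_basis[OF fin _ inj3]) (use i3 True in \<open>auto intro: V.span_base\<close>)
    then show ?thesis using True c3 by simp
  next
    case False
    have ww: "\<phi> w \<noteq> \<phi> x" "\<phi> w \<noteq> \<phi> y" "\<phi> w \<noteq> \<phi> z" using False by (auto intro: V.span_base)
    have i4: "V.independent {\<phi> x, \<phi> y, \<phi> z, \<phi> w}"
      using V.independent_insertI[OF False i3] by (simp add: insert_commute)
    have inj4: "inj_on \<phi> {x, y, z, w}" using inj3 ww by auto
    have c4: "card {x, y, z, w} = 4" using i2(2) zz ww by (auto simp: card_insert_if)
    have "vrank \<phi> {x, y, z, w} = card {x, y, z, w}"
      by (rule vrank_basis[OF fin _ inj4]) (use i4 in \<open>auto intro: V.span_base\<close>)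
    then show ?thesis using False c4 by simp
  qed
qed

end

locale plane = rep M \<phi> for M :: "'a matroid" and \<phi> :: "'a \<Rightarrow> nat \<Rightarrow> 'f::{field,finite}" +
  fixes a b c :: 'a
  assumes abcE: "a \<in> gnd M" "b \<in> gnd M" "c \<in> gnd M"
    and ab: "a \<noteq> b" and cab: "\<phi> c \<notin> V.span {\<phi> a, \<phi> b}"
begin

abbreviation "P \<equiv> Plane a b c"

lemma abc_ind: "V.independent {\<phi> a, \<phi> b, \<phi> c}" "card {\<phi> a, \<phi> b, \<phi> c} = 3"
proof -
  have i2: "V.independent {\<phi> a, \<phi> b}" "\<phi> a \<noteq> \<phi> b" using ind2[OF abcE(1,2) ab] by auto
  have zz: "\<phi> c \<noteq> \<phi> a" "\<phi> c \<noteq> \<phi> b" using cab by (auto intro: V.span_base)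
  show "V.independent {\<phi> a, \<phi> b, \<phi> c}"
    using V.independent_insertI[OF cab i2(1)] by (simp add: insert_commute)
  show "card {\<phi> a, \<phi> b, \<phi> c} = 3" using i2(2) zz by (auto simp: card_insert_if)
qed

lemma P_E: "y \<in> P \<Longrightarrow> y \<in> E" using plane_sub by blast

lemma P_fin: "finite P" by (rule finite_subset[OF plane_sub finE])

lemma abc_in: "a \<in> P" "b \<in> P" "c \<in> P"
  using abcE by (auto simp: Plane_def intro: V.span_base)

lemma span3_eq:
  assumes "x \<in> P" "y \<in> P" "z \<in> P" "x \<noteq> y" "\<phi> z \<notin> V.span {\<phi> x, \<phi> y}"
  shows "V.span {\<phi> x, \<phi> y, \<phi> z} = V.span {\<phi> a, \<phi> b, \<phi> c}"
proof -
  have xE: "x \<in> E" "y \<in> E" "z \<in> E" using assms plane_sub by auto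
  have i2: "V.independent {\<phi> x, \<phi> y}" "\<phi> x \<noteq> \<phi> y" using ind2[OF xE(1,2) assms(4)] by auto
  have zz: "\<phi> z \<noteq> \<phi> x" "\<phi> z \<noteq> \<phi> y" using assms(5) by (auto intro: V.span_base)
  have i3: "V.independent {\<phi> x, \<phi> y, \<phi> z}"
    using V.independent_insertI[OF assms(5) i2(1)] by (simp add: insert_commute)
  have c3: "card {\<phi> x, \<phi> y, \<phi> z} = 3" using i2(2) zz by (auto simp: card_insert_if)
  show ?thesis
    by (rule span_eq_card) (use i3 c3 abc_ind assms(1-3) in \<open>auto simp: Plane_def\<close>)
qed

lemma line_in_P:
  assumes "x \<in> P" "y \<in> P" shows "Line x y \<subseteq> P"
proof -
  have "V.span {\<phi> x, \<phi> y} \<subseteq> V.span {\<phi> a, \<phi> b, \<phi> c}"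
    using assms by (intro V.span_minimal) (auto simp: Plane_def)
  then show ?thesis by (auto simp: Line_def Plane_def)
qed

lemma P_witness:
  assumes "x \<in> P"
  obtains y z where "y \<in> P" "z \<in> P" "y \<noteq> x" "\<phi> z \<notin> V.span {\<phi> x, \<phi> y}"
proof -
  obtain y where y: "y \<in> {a, b}" "y \<noteq> x" using ab by auto
  then have yP: "y \<in> P" using abc_in by auto
  have "\<exists>z\<in>{a,b,c}. \<phi> z \<notin> V.span {\<phi> x, \<phi> y}"
  proof (rule ccontr)
    assume "\<not> (\<exists>z\<in>{a,b,c}. \<phi> z \<notin> V.span {\<phi> x, \<phi> y})"
    then have sub: "{\<phi> a, \<phi> b, \<phi> c} \<subseteq> V.span {\<phi> x, \<phi> y}" by auto
    have "card {\<phi> a, \<phi> b, \<phi> c} \<le> card {\<phi> x, \<phi> y}"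
      using V.independent_span_bound[OF _ abc_ind(1) sub] by simp
    moreover have "card {\<phi> x, \<phi> y} \<le> 2" by (simp add: card_insert_if)
    ultimately show False using abc_ind(2) by simp
  qed
  then obtain z where z: "z \<in> {a,b,c}" "\<phi> z \<notin> V.span {\<phi> x, \<phi> y}" by blast
  have "z \<in> P" using z(1) abc_in by blast
  show ?thesis by (rule that[OF yP \<open>z \<in> P\<close> y(2) z(2)])
qed

lemma vrank_P: "vrank \<phi> P = 3"
proof -
  have "vrank \<phi> P = card {a, b, c}"
  proof (rule vrank_basis[OF P_fin])
    show "{a, b, c} \<subseteq> P" using abc_in by auto
    show "inj_on \<phi> {a, b, c}" using inj_on_subset[OF inj_E] abcE by auto
    show "V.independent (\<phi> ` {a, b, c})" using abc_ind by simp
    show "\<phi> ` P \<subseteq> V.span (\<phi> ` {a, b, c})" by (auto simp: Plane_def)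
  qed
  moreover have "card {a, b, c} = 3"
  proof -
    have "inj_on \<phi> {a, b, c}" using inj_on_subset[OF inj_E] abcE by auto
    then have "card {a, b, c} = card (\<phi> ` {a, b, c})" by (simp only: card_image)
    then show ?thesis using abc_ind(2) by simp
  qed
  ultimately show ?thesis by simp
qed

lemma vrank_P_insert:
  assumes "e \<in> E - P" shows "4 \<le> vrank \<phi> (insert e P)"
proof -
  have "vrank \<phi> {a, b, c, e} \<le> vrank \<phi> (insert e P)"
    by (rule vrank_mono) (use P_fin abc_in in auto)
  moreover have "vrank \<phi> {a, b, c, e} = 4"
    using vrank_wxyz[OF abcE(1,2) ab abcE(3) cab, of e] assms by (auto simp: Plane_def)
  ultimately show ?thesis by simp
qed

lemma LT_fin: "finite (LT x P)"
  unfolding LT_def using P_fin by simp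

lemma LT_elem:
  assumes "ln \<in> LT x P" "x \<in> P"
  obtains y where "y \<in> P" "y \<noteq> x" "ln = Line x y"
  using assms unfolding LT_def by blast

lemma LT_in: "x \<in> P \<Longrightarrow> y \<in> P \<Longrightarrow> y \<noteq> x \<Longrightarrow> Line x y \<in> LT x P"
  unfolding LT_def by blast

lemma LT_count:
  assumes "x \<in> P"
  shows "card P = Suc (\<Sum>ln\<in>LT x P. card ln - 1)"
proof -
  have xE: "x \<in> E" using assms plane_sub by auto
  have U: "P - {x} = (\<Union>ln\<in>LT x P. ln - {x})"
  proof
    show "P - {x} \<subseteq> (\<Union>ln\<in>LT x P. ln - {x})"
    proof
      fix y assume y: "y \<in> P - {x}"
      have yE: "y \<in> E" using y plane_sub by blast
      have "y \<in> Line x y - {x}" using line_mem(2)[OF xE yE] y by blast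
      moreover have "Line x y \<in> LT x P" using LT_in[OF assms] y by blast
      ultimately show "y \<in> (\<Union>ln\<in>LT x P. ln - {x})" by blast
    qed
    show "(\<Union>ln\<in>LT x P. ln - {x}) \<subseteq> P - {x}"
      using line_in_P[OF assms] unfolding LT_def by blast
  qed
  have disj: "\<forall>ln1\<in>LT x P. \<forall>ln2\<in>LT x P. ln1 \<noteq> ln2 \<longrightarrow> (ln1 - {x}) \<inter> (ln2 - {x}) = {}"
  proof (intro ballI impI)
    fix ln1 ln2 assume l: "ln1 \<in> LT x P" "ln2 \<in> LT x P" "ln1 \<noteq> ln2"
    obtain y1 where y1: "y1 \<in> P" "y1 \<noteq> x" "ln1 = Line x y1" using LT_elem[OF l(1) assms] .
    obtain y2 where y2: "y2 \<in> P" "y2 \<noteq> x" "ln2 = Line x y2" using LT_elem[OF l(2) assms] .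
    show "(ln1 - {x}) \<inter> (ln2 - {x}) = {}"
    proof (rule ccontr)
      assume "(ln1 - {x}) \<inter> (ln2 - {x}) \<noteq> {}"
      then obtain v where v: "v \<in> ln1" "v \<in> ln2" "v \<noteq> x" by blast
      have y1E: "y1 \<in> E" "y2 \<in> E" using y1 y2 plane_sub by blast+
      have "Line x v = ln1" using line_eq2[OF xE y1E(1) _ _ v(3)] y1 v(1) by simp
      moreover have "Line x v = ln2" using line_eq2[OF xE y1E(2) _ _ v(3)] y2 v(2) by simp
      ultimately show False using l(3) by simp
    qed
  qed
  have "card (P - {x}) = (\<Sum>ln\<in>LT x P. card (ln - {x}))"
    unfolding U by (rule card_UN_disjoint[OF LT_fin _ disj]) (simp add: line_fin LT_def)
  also have "\<dots> = (\<Sum>ln\<in>LT x P. card ln - 1)"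
  proof (rule sum.cong[OF HOL.refl])
    fix ln assume "ln \<in> LT x P"
    then obtain y where "y \<in> P" "ln = Line x y" using LT_elem[OF _ assms] by metis
    then have "x \<in> ln" using line_mem(1)[OF xE] P_E by auto
    then show "card (ln - {x}) = card ln - 1" by (simp add: line_fin \<open>ln = Line x y\<close>)
  qed
  finally show ?thesis using P_fin assms
    by (metis card_Diff_singleton card_Suc_Diff1)
qed

lemma LT_card:
  assumes xP: "x \<in> P"
    and simp: "is_simplification_set (contract M {x}) S"
    and iso: "iso (restrict (contract M {x}) S) (PG n TYPE('f))"
  shows "card (LT x P) = Suc (card (UNIV :: 'f set))"
proof -
  let ?C = "contract M {x}"
  have xE: "x \<in> E" using xP by (rule P_E)
  have gC: "gnd ?C = E - {x}" by (simp add: contract_def gnd_def)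
  have rkC: "rk ?C X = rk M (X \<union> {x}) - rk M {x}" for X by (simp add: contract_def rk_def)
  have r1: "rk M {x} = 1" using rkE[of "{x}"] xE vrank_single[OF xE] by simp
  have rk_e: "rk ?C {e} = 1" if "e \<in> E - {x}" for e
  proof -
    have "{e} \<union> {x} = {e, x}" by auto
    then have "rk M ({e} \<union> {x}) = 2" using rkE[of "{e,x}"] vrank_pair[of e x] that xE by auto
    then show ?thesis using rkC r1 by simp
  qed
  have rk_ef: "rk ?C {e, f} = 1 \<longleftrightarrow> f \<in> Line x e" if "e \<in> E - {x}" "f \<in> E - {x}" for e f
  proof -
    have "{e, f} \<union> {x} = {x, e, f}" by auto
    then have "rk M ({e, f} \<union> {x}) = (if f \<in> Line x e then 2 else 3)"
      using rkE[of "{x,e,f}"] vrank_xyz[of x e f] that xE by auto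
    then show ?thesis using rkC r1 by simp
  qed
  have simpD1: "S \<subseteq> {e \<in> gnd ?C. rk ?C {e} = 1}"
    and simpD2: "\<forall>e\<in>gnd ?C. rk ?C {e} = 1 \<longrightarrow> (\<exists>!f. f \<in> S \<and> rk ?C {e, f} = 1)"
    using simp unfolding is_simplification_set_def by blast+
  have SE: "S \<subseteq> E - {x}" using simpD1 unfolding gC by blast
  have uniq: "\<exists>!f. f \<in> S \<and> f \<in> Line x e" if "e \<in> E - {x}" for e
  proof -
    have "\<exists>!f. f \<in> S \<and> rk ?C {e, f} = 1"
      using simpD2 rk_e[OF that] that unfolding gC by blast
    then obtain f where f: "f \<in> S" "rk ?C {e, f} = 1" and fu: "\<And>f'. f' \<in> S \<and> rk ?C {e, f'} = 1 \<Longrightarrow> f' = f"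
      by blast
    have eq: "f' \<in> S \<and> rk ?C {e, f'} = 1 \<longleftrightarrow> f' \<in> S \<and> f' \<in> Line x e" for f'
    proof
      assume h: "f' \<in> S \<and> rk ?C {e, f'} = 1"
      then have "f' \<in> E - {x}" using SE by blast
      then show "f' \<in> S \<and> f' \<in> Line x e" using rk_ef[OF that] h by blast
    next
      assume h: "f' \<in> S \<and> f' \<in> Line x e"
      then have "f' \<in> E - {x}" using SE by blast
      then show "f' \<in> S \<and> rk ?C {e, f'} = 1" using rk_ef[OF that] h by blast
    qed
    show ?thesis
    proof (rule ex1I[of _ f])
      show "f \<in> S \<and> f \<in> Line x e" using eq f by blast
      show "\<And>f'. f' \<in> S \<and> f' \<in> Line x e \<Longrightarrow> f' = f" using eq fu by blast
    qed
  qed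
  obtain g where bij0: "bij_betw g (gnd (restrict ?C S)) (gnd (PG n TYPE('f)))"
    and grk0: "\<forall>X \<subseteq> gnd (restrict ?C S). rk (PG n TYPE('f)) (g ` X) = rk (restrict ?C S) X"
    using iso unfolding iso_def by (elim exE conjE) 
  have bij: "bij_betw g S (PGg n)" using bij0 by (simp only: restr_gnd PG_gnd)
  have grk: "vrank id (g ` X) = rk ?C X" if "X \<subseteq> S" for X
    using grk0 that by (simp only: restr_gnd restr_rk PG_rk)
  have ginj: "inj_on g S" and gS: "g ` S = PGg n" using bij by (auto simp: bij_betw_def)
  have m_inj: "inj_on (\<lambda>s. Line x s) (S \<inter> P)"
  proof (rule inj_onI)
    fix s s' assume s: "s \<in> S \<inter> P" "s' \<in> S \<inter> P" "Line x s = Line x s'"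
    have sE: "s \<in> E - {x}" "s' \<in> E - {x}" using s SE by auto
    have "s \<in> Line x s" using line_mem(2)[OF xE] sE by auto
    moreover have "s' \<in> Line x s" using line_mem(2)[OF xE] sE s(3) by auto
    ultimately show "s = s'" using uniq[OF sE(1)] s by blast
  qed
  have m_img: "(\<lambda>s. Line x s) ` (S \<inter> P) = LT x P"
  proof
    show "(\<lambda>s. Line x s) ` (S \<inter> P) \<subseteq> LT x P"
      using SE LT_in[OF xP] by auto
    show "LT x P \<subseteq> (\<lambda>s. Line x s) ` (S \<inter> P)"
    proof
      fix ln assume "ln \<in> LT x P"
      then obtain y where y: "y \<in> P" "y \<noteq> x" "ln = Line x y" using LT_elem[OF _ xP] by metis
      have yE: "y \<in> E" using y(1) by (rule P_E)
      obtain f where f: "f \<in> S" "f \<in> Line x y" using uniq[of y] yE y(2) by blast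
      have fx: "f \<noteq> x" using f(1) SE by auto
      have "Line x f = Line x y" by (rule line_eq2[OF xE yE _ f(2) fx]) (use y in auto)
      moreover have "f \<in> P" using f(2) line_in_P[OF xP y(1)] by blast
      ultimately show "ln \<in> (\<lambda>s. Line x s) ` (S \<inter> P)" using f(1) y(3) by blast
    qed
  qed
  have cardLT: "card (LT x P) = card (S \<inter> P)"
    using card_image[OF m_inj] m_img by simp
  obtain y z where yz: "y \<in> P" "z \<in> P" "y \<noteq> x" "\<phi> z \<notin> V.span {\<phi> x, \<phi> y}"
    using P_witness[OF xP] by blast
  have yE: "y \<in> E" and zE: "z \<in> E" using yz P_E by auto
  have zx: "z \<noteq> x" using yz(4) V.span_base[of "\<phi> x" "{\<phi> x, \<phi> y}"] by auto
  have "Line x y \<in> LT x P" "Line x z \<in> LT x P" using LT_in[OF xP] yz zx by auto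
  then obtain u v where u: "u \<in> S \<inter> P" "Line x u = Line x y" and v: "v \<in> S \<inter> P" "Line x v = Line x z"
    using m_img by (metis (no_types, lifting) imageE)
  have uE: "u \<in> E" "u \<noteq> x" and vE: "v \<in> E" "v \<noteq> x" using u(1) v(1) SE by auto
  have vnot: "v \<notin> Line x u"
  proof
    assume "v \<in> Line x u"
    then have "Line x v = Line x u" by (rule line_eq2[OF xE uE(1) uE(2)[symmetric] _ vE(2)])
    then have "Line x z = Line x y" using u(2) v(2) by simp
    then have "z \<in> Line x y" using line_mem(2)[OF xE zE] by simp
    then show False using yz(4) by (simp add: Line_def)
  qed
  have uv: "u \<noteq> v" using vnot line_mem(2)[OF xE uE(1)] by auto
  have vspan: "\<phi> v \<notin> V.span {\<phi> x, \<phi> u}" using vnot vE by (simp add: Line_def)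
  have spanP: "V.span {\<phi> x, \<phi> u, \<phi> v} = V.span {\<phi> a, \<phi> b, \<phi> c}"
    by (rule span3_eq[OF xP _ _ uE(2)[symmetric] vspan]) (use u v in auto)
  have guv: "g u \<in> PGg n" "g v \<in> PGg n" "g u \<noteq> g v"
    using u(1) v(1) gS ginj uv by (auto dest: inj_onD)
  have key: "g s \<in> V.span {g u, g v} \<longleftrightarrow> s \<in> P" if sS: "s \<in> S" for s
  proof -
    have sE: "s \<in> E" using sS SE by auto
    have gs: "g s \<in> PGg n" using sS gS by auto
    have i2: "V.independent {id (g u), id (g v)}" "id (g u) \<noteq> id (g v)"
      using PG_indep[OF guv] guv(3) by auto
    have v1: "vrank id {g u, g v, g s} = (if g s \<in> V.span {g u, g v} then 2 else 3)"
      using vrank_two[of id "g u" "g v" "g s"] vrank_three[of id "g u" "g v" "g s"] i2 by auto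
    have "vrank id (g ` {u, v, s}) = rk ?C {u, v, s}" by (rule grk) (use u v sS in auto)
    then have v2: "vrank id {g u, g v, g s} = rk M ({u, v, s} \<union> {x}) - 1" using rkC r1 by simp
    have "{u, v, s} \<union> {x} = {x, u, v, s}" by auto
    then have "rk M ({u, v, s} \<union> {x}) = vrank \<phi> {x, u, v, s}"
      using rkE[of "{x,u,v,s}"] xE uE vE sE by simp
    also have "\<dots> = (if \<phi> s \<in> V.span {\<phi> x, \<phi> u, \<phi> v} then 3 else 4)"
      by (rule vrank_wxyz[OF xE uE(1) uE(2)[symmetric] vE(1) vspan sE])
    finally have v3: "rk M ({u, v, s} \<union> {x}) = (if \<phi> s \<in> V.span {\<phi> a, \<phi> b, \<phi> c} then 3 else 4)"
      using spanP by simp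
    have "g s \<in> V.span {g u, g v} \<longleftrightarrow> \<phi> s \<in> V.span {\<phi> a, \<phi> b, \<phi> c}"
      using v1 v2 v3 by (auto split: if_splits)
    then show ?thesis using sE by (simp add: Plane_def)
  qed
  have gimg: "g ` (S \<inter> P) = {w \<in> PGg n. w \<in> V.span {g u, g v}}"
  proof
    show "g ` (S \<inter> P) \<subseteq> {w \<in> PGg n. w \<in> V.span {g u, g v}}"
      using key gS by auto
    show "{w \<in> PGg n. w \<in> V.span {g u, g v}} \<subseteq> g ` (S \<inter> P)"
    proof
      fix w assume w: "w \<in> {w \<in> PGg n. w \<in> V.span {g u, g v}}"
      then obtain s where s: "s \<in> S" "w = g s" using gS by (metis (no_types, lifting) CollectD imageE)
      then have "s \<in> P" using key w by auto
      then show "w \<in> g ` (S \<inter> P)" using s by blast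
    qed
  qed
  have "card (S \<inter> P) = card (g ` (S \<inter> P))"
    using card_image[OF inj_on_subset[OF ginj]] by (metis inf_le1)
  also have "\<dots> = Suc (card (UNIV :: 'f set))"
    unfolding gimg by (rule PG_line_card[OF guv])
  finally show ?thesis using cardLT by simp
qed

end

lemma arith_contra:
  fixes q a F :: nat
  assumes "3 \<le> q" "1 \<le> a" "a \<le> q" "(q + 2 + a * (q - 1)) * a = (q + 1) * F"
    "F = 1 + (q + 1) * (a - 1)"
  shows False
proof -
  obtain t where t: "q = t + 1" using assms(1) by (metis add.commute add_leD1 le_Suc_ex numeral_3_eq_3 plus_1_eq_Suc)
  obtain b where b: "a = b + 1" using assms(2) by (metis add.commute le_Suc_ex plus_1_eq_Suc)
  have h: "(t + 1 + 2 + (b + 1) * t) * (b + 1) = (t + 1 + 1) * (1 + (t + 1 + 1) * b)"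
    using assms(4,5) unfolding t b by simp
  have hi: "(int t + 3 + (int b + 1) * int t) * (int b + 1) = (int t + 2) * (1 + (int t + 2) * int b)"
    using arg_cong[OF h, of int] by (simp add: algebra_simps)
  have "(int b - int t - 1) * (int t * (int b + 1) - (int t + 1)) = 0"
    using hi by algebra
  moreover have "int b - int t - 1 \<noteq> 0" using assms(3) t b by simp
  ultimately have e: "int t * (int b + 1) = int t + 1" by simp
  show False
  proof (cases "b = 0")
    case True then show ?thesis using e by simp
  next
    case False
    then have "int t * 2 \<le> int t * (int b + 1)" by (intro mult_left_mono) auto
    then show ?thesis using e assms(1) t by simp
  qed
qed

lemma span1_sym:
  fixes w y :: "nat \<Rightarrow> 'f::field"
  assumes "w \<in> V.span {y}" "w \<noteq> 0" shows "y \<in> V.span {w}"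
proof -
  obtain c where c: "w = sc c y" using assms(1) by (auto simp: V.span_singleton)
  then have "c \<noteq> 0" using assms(2) by (auto simp: fun_eq_iff)
  then have "y = sc (inverse c) w" using c by (simp add: fun_eq_iff)
  then show ?thesis by (simp only: sc_in_span1)
qed

context plane
begin

definition LP :: "'a set set" where
  "LP = {Line u v | u v. u \<in> P \<and> v \<in> P \<and> u \<noteq> v}"

definition Acnt :: "'a \<Rightarrow> nat" where
  "Acnt p = card {ln \<in> LT p P. card ln = Suc (card (UNIV :: 'f set))}"

lemma LP_sub: "ln \<in> LP \<Longrightarrow> ln \<subseteq> P"
  unfolding LP_def using line_in_P by blast

lemma LP_fin: "finite LP"
proof -
  have "LP \<subseteq> Pow P" using LP_sub by blast
  then show ?thesis using P_fin finite_subset by blast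
qed

lemma LP_elem:
  assumes "ln \<in> LP" obtains u v where "u \<in> P" "v \<in> P" "u \<noteq> v" "ln = Line u v"
  using assms unfolding LP_def by blast

lemma LP_through:
  assumes pP: "p \<in> P" shows "{ln \<in> LP. p \<in> ln} = LT p P"
proof
  have pE: "p \<in> E" using pP by (rule P_E)
  show "{ln \<in> LP. p \<in> ln} \<subseteq> LT p P"
  proof
    fix ln assume "ln \<in> {ln \<in> LP. p \<in> ln}"
    then have l: "ln \<in> LP" "p \<in> ln" by auto
    obtain u v where uv: "u \<in> P" "v \<in> P" "u \<noteq> v" "ln = Line u v" using LP_elem[OF l(1)] by blast
    have uvE: "u \<in> E" "v \<in> E" using uv P_E by auto
    obtain w where w: "w \<in> {u, v}" "w \<noteq> p" using uv(3) by blast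
    have wl: "w \<in> Line u v" using w(1) line_mem[OF uvE] by auto
    have "Line p w = Line u v"
      by (rule line_eq[OF uvE uv(3)]) (use l(2) uv(4) wl w(2) in auto)
    moreover have "w \<in> P" using w(1) uv by auto
    ultimately show "ln \<in> LT p P" using LT_in[OF pP, of w] w(2) uv(4) by simp
  qed
  show "LT p P \<subseteq> {ln \<in> LP. p \<in> ln}"
  proof
    fix ln assume "ln \<in> LT p P"
    then obtain y where y: "y \<in> P" "y \<noteq> p" "ln = Line p y" using LT_elem[OF _ pP] by metis
    have "ln \<in> LP" unfolding LP_def using y pP by blast
    moreover have "p \<in> ln" using y(3) line_mem(1)[OF pE P_E[OF y(1)]] by simp
    ultimately show "ln \<in> {ln \<in> LP. p \<in> ln}" by blast
  qed
qed

lemma count_eq: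
  assumes pP: "p \<in> P"
    and H1: "\<forall>ln\<in>LT p P. card ln = 2 \<or> card ln = Suc (card (UNIV :: 'f set))"
    and H2: "card (LT p P) = Suc (card (UNIV :: 'f set))"
  shows "card P = card (UNIV :: 'f set) + 2 + Acnt p * (card (UNIV :: 'f set) - 1)"
proof -
  let ?q = "card (UNIV :: 'f set)"
  let ?F = "{ln \<in> LT p P. card ln = Suc ?q}"
  have fin: "finite (LT p P)" by (rule LT_fin)
  have q1: "1 \<le> ?q" by (simp add: Suc_le_eq card_gt_0_iff)
  have "(\<Sum>ln\<in>LT p P. card ln - 1) = (\<Sum>ln\<in>LT p P. 1 + (if card ln = Suc ?q then ?q - 1 else 0))"
    by (rule sum.cong[OF HOL.refl]) (use H1 q1 in auto)
  also have "\<dots> = card (LT p P) + (\<Sum>ln\<in>LT p P. if card ln = Suc ?q then ?q - 1 else 0)"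
    by (simp only: sum.distrib) simp
  also have "(\<Sum>ln\<in>LT p P. if card ln = Suc ?q then ?q - 1 else 0) = (\<Sum>ln\<in>?F. ?q - 1)"
    by (rule sum.inter_filter[OF fin, symmetric])
  also have "\<dots> = Acnt p * (?q - 1)" by (simp add: Acnt_def)
  finally have s: "(\<Sum>ln\<in>LT p P. card ln - 1) = Suc ?q + Acnt p * (?q - 1)" using H2 by simp
  have q1: "1 \<le> ?q" by (simp add: Suc_le_eq card_gt_0_iff)
  show ?thesis using LT_count[OF pP] s by simp
qed

lemma ne_by_mem: "x \<in> A \<Longrightarrow> A \<noteq> {}" by blast

lemma meet_full:
  assumes L: "L \<in> LP" "card L = Suc (card (UNIV :: 'f set))"
    and l: "ln \<in> LP" "ln \<noteq> L"
  shows "card (ln \<inter> L) = 1"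
proof -
  obtain u0 v0 where L0: "u0 \<in> P" "v0 \<in> P" "u0 \<noteq> v0" "L = Line u0 v0" using LP_elem[OF L(1)] by blast
  obtain u v where l0: "u \<in> P" "v \<in> P" "u \<noteq> v" "ln = Line u v" using LP_elem[OF l(1)] by blast
  have E0: "u0 \<in> E" "v0 \<in> E" "u \<in> E" "v \<in> E" using L0 l0 P_E by auto
  have LE: "L \<subseteq> E" unfolding L0(4) by (rule line_sub)
  have le1: "card (ln \<inter> L) \<le> 1"
  proof (rule ccontr)
    assume "\<not> card (ln \<inter> L) \<le> 1"
    then obtain w1 w2 where w: "w1 \<in> ln \<inter> L" "w2 \<in> ln \<inter> L" "w1 \<noteq> w2"
      by (metis One_nat_def card.infinite card_le_Suc0_iff_eq not_less_eq_eq zero_le)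
    have "Line w1 w2 = ln" using line_eq[OF E0(3,4) l0(3)] w l0(4) by auto
    moreover have "Line w1 w2 = L" using line_eq[OF E0(1,2) L0(3)] w L0(4) by auto
    ultimately show False using l(2) by simp
  qed
  have ne: "ln \<inter> L \<noteq> {}"
  proof (cases "u \<in> L \<or> v \<in> L")
    case True
    then show ?thesis using line_mem[OF E0(3,4)] l0(4) by auto
  next
    case False
    have uL: "\<phi> u \<notin> V.span {\<phi> u0, \<phi> v0}" using False E0 L0(4) by (auto simp: Line_def)
    have sp: "V.span {\<phi> u0, \<phi> v0, \<phi> u} = V.span {\<phi> a, \<phi> b, \<phi> c}"
      by (rule span3_eq[OF L0(1,2) l0(1) L0(3) uL])
    have "\<phi> v \<in> V.span {\<phi> a, \<phi> b, \<phi> c}" using l0(2) by (simp add: Plane_def)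
    then have "\<phi> v \<in> V.span (insert (\<phi> u) {\<phi> u0, \<phi> v0})" using sp by (simp add: insert_commute)
    then obtain k where k: "\<phi> v - sc k (\<phi> u) \<in> V.span {\<phi> u0, \<phi> v0}" using V.span_breakdown_eq by blast
    let ?w = "\<phi> v - sc k (\<phi> u)"
    have w0: "?w \<noteq> 0"
    proof
      assume "?w = 0"
      then have "\<phi> v = sc k (\<phi> u)" by simp
      then have "\<phi> v \<in> V.span {\<phi> u}" by (simp only: sc_in_span1)
      then show False using pairE[OF E0(4,3)] l0(3) by auto
    qed
    have wl: "?w \<in> V.span {\<phi> u, \<phi> v}"
    proof -
      have "\<phi> u \<in> V.span {\<phi> u, \<phi> v}" "\<phi> v \<in> V.span {\<phi> u, \<phi> v}" by (auto intro: V.span_base)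
      then show ?thesis by (intro V.span_diff V.span_scale)
    qed
    have "\<exists>z\<in>\<phi> ` L. ?w \<in> V.span {z}"
    proof (rule line_full[OF ind2[OF E0(1,2) L0(3)]])
      show "\<phi> ` L \<subseteq> V.span {\<phi> u0, \<phi> v0}" using L0(4) by (auto simp: Line_def)
      show "0 \<notin> \<phi> ` L"
      proof
        assume "0 \<in> \<phi> ` L"
        then obtain z where z: "0 = \<phi> z" "z \<in> L" by (rule imageE)
        have "z \<in> E" using z(2) LE by blast
        then have "\<phi> z \<noteq> 0" by (rule nzE)
        then show False using z(1) by simp
      qed
      show "\<And>z z'. z \<in> \<phi> ` L \<Longrightarrow> z' \<in> \<phi> ` L \<Longrightarrow> z \<noteq> z' \<Longrightarrow> z \<notin> V.span {z'}"
      proof -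
        fix z z' assume h: "z \<in> \<phi> ` L" "z' \<in> \<phi> ` L" "z \<noteq> z'"
        obtain y where y: "z = \<phi> y" "y \<in> L" using h(1) by (rule imageE)
        obtain y' where y': "z' = \<phi> y'" "y' \<in> L" using h(2) by (rule imageE)
        have "y \<noteq> y'" using h(3) y(1) y'(1) by auto
        moreover have "y \<in> E" "y' \<in> E" using y(2) y'(2) LE by auto
        ultimately have "\<phi> y \<notin> V.span {\<phi> y'}" by (intro pairE)
        then show "z \<notin> V.span {z'}" using y(1) y'(1) by simp
      qed
      have "card (\<phi> ` L) = card L" by (rule card_image[OF inj_on_subset[OF inj_E LE]])
      then show "Suc (card (UNIV :: 'f set)) \<le> card (\<phi> ` L)" using L(2) by simp
      show "?w \<in> V.span {\<phi> u0, \<phi> v0}" by (rule k)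
      show "?w \<noteq> 0" by (rule w0)
    qed
    then obtain z' where z': "z' \<in> \<phi> ` L" "?w \<in> V.span {z'}" by (rule bexE)
    obtain z where z0: "z \<in> L" "z' = \<phi> z" using z'(1) by blast
    have z: "z \<in> L" "?w \<in> V.span {\<phi> z}" using z0 z'(2) by simp_all
    have "\<phi> z \<in> V.span {?w}" by (rule span1_sym[OF z(2) w0])
    then have "\<phi> z \<in> V.span {\<phi> u, \<phi> v}"
      using V.span_mono[of "{?w}" "V.span {\<phi> u, \<phi> v}"] wl by (auto simp: V.span_span)
    moreover have "z \<in> E" using z(1) LE by blast
    ultimately have "z \<in> ln" unfolding l0(4) Line_def by blast
    then have "z \<in> ln \<inter> L" using z(1) by (rule IntI)
    then show ?thesis by (rule ne_by_mem)
  qed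
  have "finite (ln \<inter> L)" using L0(4) line_fin by simp
  then show ?thesis using le1 ne by (metis One_nat_def card_0_eq le_SucE le_zero_eq)
qed

lemma plane_main:
  assumes q3: "3 \<le> card (UNIV :: 'f set)"
    and H1: "\<forall>ln\<in>LP. card ln = 2 \<or> card ln = Suc (card (UNIV :: 'f set))"
    and H2: "\<forall>p\<in>P. card (LT p P) = Suc (card (UNIV :: 'f set))"
    and H3: "card (Line a b) = 2"
  shows "\<forall>ln\<in>LP. card ln = 2" "card P = card (UNIV :: 'f set) + 2"
proof -
  let ?q = "card (UNIV :: 'f set)"
  have cnt: "card P = ?q + 2 + Acnt p * (?q - 1)" if pP: "p \<in> P" for p
  proof (rule count_eq[OF pP])
    show "\<forall>ln\<in>LT p P. card ln = 2 \<or> card ln = Suc ?q" using H1 LP_through[OF pP] by blast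
    show "card (LT p P) = Suc ?q" using H2 pP by blast
  qed
  have aP: "a \<in> P" "b \<in> P" using abc_in by auto
  have nofull: "\<not> (\<exists>L\<in>LP. card L = Suc ?q)"
  proof
    assume "\<exists>L\<in>LP. card L = Suc ?q"
    then obtain L where L: "L \<in> LP" "card L = Suc ?q" by blast
    define \<alpha> where "\<alpha> = Acnt a"
    have const: "Acnt p = \<alpha>" if "p \<in> P" for p
    proof -
      have "Acnt p * (?q - 1) = Acnt a * (?q - 1)" using cnt[OF that] cnt[OF aP(1)] by linarith
      moreover have "?q - 1 \<noteq> 0" using q3 by simp
      ultimately have "Acnt p = Acnt a" using mult_right_cancel by blast
      then show ?thesis unfolding \<alpha>_def .
    qed
    have fin_a: "finite (LT a P)" by (rule LT_fin)
    have ab_in: "Line a b \<in> LT a P" using LT_in[OF aP] ab by auto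
    have "{ln \<in> LT a P. card ln = Suc ?q} \<subseteq> LT a P - {Line a b}" using H3 q3 by auto
    then have "\<alpha> \<le> card (LT a P - {Line a b})" unfolding \<alpha>_def Acnt_def
      by (intro card_mono) (use fin_a in auto)
    also have "\<dots> = ?q" using H2 aP(1) ab_in fin_a by simp
    finally have \<alpha>q: "\<alpha> \<le> ?q" .
    obtain u0 v0 where uv0: "u0 \<in> P" "v0 \<in> P" "u0 \<noteq> v0" "L = Line u0 v0" using LP_elem[OF L(1)] by blast
    have u0L: "u0 \<in> L" using uv0 line_mem(1) P_E by auto
    have "L \<in> {ln \<in> LT u0 P. card ln = Suc ?q}" using LP_through[OF uv0(1)] L u0L by blast
    moreover have "finite {ln \<in> LT u0 P. card ln = Suc ?q}" using LT_fin by simp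
    ultimately have "0 < Acnt u0" unfolding Acnt_def by (auto simp: card_gt_0_iff)
    then have \<alpha>1: "1 \<le> \<alpha>" using const[OF uv0(1)] by simp
    define F where "F = {ln \<in> LP. card ln = Suc ?q}"
    have finF: "finite F" unfolding F_def using LP_fin by simp
    have LF: "L \<in> F" unfolding F_def using L by simp
    have thr: "card {ln \<in> F. p \<in> ln} = \<alpha>" if pP: "p \<in> P" for p
    proof -
      have "{ln \<in> F. p \<in> ln} = {ln \<in> LT p P. card ln = Suc ?q}"
        using LP_through[OF pP] unfolding F_def by blast
      then show ?thesis using const[OF pP] by (simp add: Acnt_def)
    qed
    have "(\<Sum>p\<in>P. card {ln \<in> F. p \<in> ln}) = Suc ?q * card F"
    proof (rule sum_multicount[OF P_fin finF])
      show "\<forall>ln\<in>F. card {p \<in> P. p \<in> ln} = Suc ?q"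
      proof
        fix ln assume "ln \<in> F"
        then have "ln \<in> LP" "card ln = Suc ?q" unfolding F_def by auto
        moreover have "{p \<in> P. p \<in> ln} = ln" using LP_sub[OF \<open>ln \<in> LP\<close>] by blast
        ultimately show "card {p \<in> P. p \<in> ln} = Suc ?q" by simp
      qed
    qed
    moreover have "(\<Sum>p\<in>P. card {ln \<in> F. p \<in> ln}) = card P * \<alpha>"
      using thr by simp
    ultimately have dc1: "card P * \<alpha> = Suc ?q * card F" by simp
    let ?F' = "F - {L}"
    have LP': "L \<subseteq> P" by (rule LP_sub[OF L(1)])
    have finL: "finite L" using uv0(4) line_fin by simp
    have "(\<Sum>p\<in>L. card {ln \<in> ?F'. p \<in> ln}) = 1 * card ?F'"
    proof (rule sum_multicount[OF finL])
      show "finite ?F'" using finF by simp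
      show "\<forall>ln\<in>?F'. card {p \<in> L. p \<in> ln} = 1"
      proof
        fix ln assume "ln \<in> ?F'"
        then have "ln \<in> LP" "ln \<noteq> L" unfolding F_def by auto
        moreover have "{p \<in> L. p \<in> ln} = ln \<inter> L" by blast
        ultimately show "card {p \<in> L. p \<in> ln} = 1" using meet_full[OF L] by simp
      qed
    qed
    moreover have "card {ln \<in> ?F'. p \<in> ln} = \<alpha> - 1" if pL: "p \<in> L" for p
    proof -
      have pP: "p \<in> P" using pL LP' by blast
      have "{ln \<in> ?F'. p \<in> ln} = {ln \<in> F. p \<in> ln} - {L}" by blast
      moreover have "L \<in> {ln \<in> F. p \<in> ln}" using LF pL by blast
      moreover have "finite {ln \<in> F. p \<in> ln}" using finF by simp
      ultimately show ?thesis using thr[OF pP] by simp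
    qed
    ultimately have "card L * (\<alpha> - 1) = card F - 1"
      using finF LF by (simp add: card_Diff_singleton)
    then have dc2: "card F = 1 + (?q + 1) * (\<alpha> - 1)"
      using L(2) LF finF by (metis Suc_eq_plus1 card_0_eq empty_iff le_add_diff_inverse le_add1 plus_1_eq_Suc add.commute not_less_eq_eq Suc_pred gr0I)
    have "(?q + 2 + \<alpha> * (?q - 1)) * \<alpha> = (?q + 1) * card F"
      using dc1 cnt[OF aP(1)] unfolding \<alpha>_def by simp
    then show False using arith_contra[OF q3 \<alpha>1 \<alpha>q _ dc2] by blast
  qed
  show all2: "\<forall>ln\<in>LP. card ln = 2" using H1 nofull by blast
  have "Acnt a = 0"
  proof -
    have "{ln \<in> LT a P. card ln = Suc ?q} = {}"
      using LP_through[OF aP(1)] nofull by blast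
    then show ?thesis unfolding Acnt_def by (metis card.empty)
  qed
  then show "card P = ?q + 2" using cnt[OF aP(1)] by simp
qed

end

lemma indep_image_iff:
  fixes g :: "'a \<Rightarrow> nat \<Rightarrow> 'f::field"
  assumes fin: "finite Y" and inj: "inj_on g Y"
  shows "V.independent (g ` Y) \<longleftrightarrow> (\<forall>c. (\<Sum>y\<in>Y. sc (c y) (g y)) = 0 \<longrightarrow> (\<forall>y\<in>Y. c y = 0))"
proof -
  have finI: "finite (g ` Y)" using fin by simp
  have re: "(\<Sum>v\<in>g ` Y. sc (u v) v) = (\<Sum>y\<in>Y. sc (u (g y)) (g y))" for u
    by (rule sum.reindex[OF inj, unfolded comp_def])
  show ?thesis
  proof
    assume ind: "V.independent (g ` Y)"
    show "\<forall>c. (\<Sum>y\<in>Y. sc (c y) (g y)) = 0 \<longrightarrow> (\<forall>y\<in>Y. c y = 0)"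
    proof (intro allI impI ballI)
      fix c y assume s: "(\<Sum>y\<in>Y. sc (c y) (g y)) = 0" and yY: "y \<in> Y"
      define u where "u = (\<lambda>v. c (the_inv_into Y g v))"
      have ug: "u (g y') = c y'" if "y' \<in> Y" for y'
        unfolding u_def using the_inv_into_f_f[OF inj that] by simp
      have "(\<Sum>y\<in>Y. sc (u (g y)) (g y)) = (\<Sum>y\<in>Y. sc (c y) (g y))"
        by (rule sum.cong[OF HOL.refl]) (simp add: ug)
      then have "(\<Sum>v\<in>g ` Y. sc (u v) v) = 0" using re s by simp
      then have "\<not> (\<exists>v\<in>g ` Y. u v \<noteq> 0)"
        using ind V.dependent_finite[OF finI] by blast
      then have "u (g y) = 0" using yY by blast
      then show "c y = 0" using ug[OF yY] by simp
    qed
  next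
    assume h: "\<forall>c. (\<Sum>y\<in>Y. sc (c y) (g y)) = 0 \<longrightarrow> (\<forall>y\<in>Y. c y = 0)"
    show "V.independent (g ` Y)"
    proof
      assume "V.dependent (g ` Y)"
      then obtain u where u: "\<exists>v\<in>g ` Y. u v \<noteq> 0" "(\<Sum>v\<in>g ` Y. sc (u v) v) = 0"
        using V.dependent_finite[OF finI] by blast
      have "(\<Sum>y\<in>Y. sc (u (g y)) (g y)) = 0" using u(2) re by simp
      then have "\<forall>y\<in>Y. u (g y) = 0" using h[rule_format, of "\<lambda>y. u (g y)"] by blast
      then show False using u(1) by blast
    qed
  qed
qed

context rep
begin

lemma closure_full:
  assumes full: "\<And>x y. x \<in> E \<Longrightarrow> y \<in> E \<Longrightarrow> x \<noteq> y \<Longrightarrow> card (Line x y) = Suc (card (UNIV :: 'f set))"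
    and v: "v \<in> V.span (\<phi> ` E)"
  shows "v \<noteq> 0 \<longrightarrow> (\<exists>x\<in>E. v \<in> V.span {\<phi> x})"
  using v
proof (induction rule: V.span_induct_alt)
  case base
  then show ?case by simp
next
  case (step c w y)
  obtain x0 where x0: "x0 \<in> E" "w = \<phi> x0" using step.hyps(1) by blast
  show ?case
  proof
    assume ne: "sc c w + y \<noteq> 0"
    show "\<exists>x\<in>E. sc c w + y \<in> V.span {\<phi> x}"
    proof (cases "y = 0")
      case True
      then have "sc c w + y = sc c (\<phi> x0)" using x0 by simp
      then show ?thesis using x0(1) by (metis sc_in_span1)
    next
      case False
      then obtain y0 where y0: "y0 \<in> E" "y \<in> V.span {\<phi> y0}" using step.IH by blast
      obtain d where d: "y = sc d (\<phi> y0)" using y0(2) by (auto simp: V.span_singleton)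
      show ?thesis
      proof (cases "x0 = y0")
        case True
        have "sc c w + y = sc (c + d) (\<phi> x0)" using x0 d True by (simp add: fun_eq_iff algebra_simps)
        then show ?thesis using x0(1) by (metis sc_in_span1)
      next
        case False
        have insp: "sc c w + y \<in> V.span {\<phi> x0, \<phi> y0}"
          unfolding span2_iff using x0 d by blast
        have "\<exists>z\<in>\<phi> ` Line x0 y0. sc c w + y \<in> V.span {z}"
        proof (rule line_full[OF ind2[OF x0(1) y0(1) False]])
          show "\<phi> ` Line x0 y0 \<subseteq> V.span {\<phi> x0, \<phi> y0}" by (auto simp: Line_def)
          show "0 \<notin> \<phi> ` Line x0 y0"
          proof
            assume "0 \<in> \<phi> ` Line x0 y0"
            then obtain z where z: "0 = \<phi> z" "z \<in> Line x0 y0" by (rule imageE)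
            have "z \<in> E" using z(2) line_sub by blast
            then have "\<phi> z \<noteq> 0" by (rule nzE)
            then show False using z(1) by simp
          qed
          show "\<And>z z'. z \<in> \<phi> ` Line x0 y0 \<Longrightarrow> z' \<in> \<phi> ` Line x0 y0 \<Longrightarrow> z \<noteq> z' \<Longrightarrow> z \<notin> V.span {z'}"
          proof -
            fix z z' assume h: "z \<in> \<phi> ` Line x0 y0" "z' \<in> \<phi> ` Line x0 y0" "z \<noteq> z'"
            obtain a1 where a1: "z = \<phi> a1" "a1 \<in> Line x0 y0" using h(1) by (rule imageE)
            obtain a2 where a2: "z' = \<phi> a2" "a2 \<in> Line x0 y0" using h(2) by (rule imageE)
            have "a1 \<noteq> a2" using h(3) a1(1) a2(1) by auto
            moreover have "a1 \<in> E" "a2 \<in> E" using a1(2) a2(2) line_sub by auto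
            ultimately have "\<phi> a1 \<notin> V.span {\<phi> a2}" by (intro pairE)
            then show "z \<notin> V.span {z'}" using a1(1) a2(1) by simp
          qed
          have "card (\<phi> ` Line x0 y0) = card (Line x0 y0)"
            by (rule card_image[OF inj_on_subset[OF inj_E line_sub]])
          then show "Suc (card (UNIV :: 'f set)) \<le> card (\<phi> ` Line x0 y0)"
            using full[OF x0(1) y0(1) False] by simp
          show "sc c w + y \<in> V.span {\<phi> x0, \<phi> y0}" by (rule insp)
          show "sc c w + y \<noteq> 0" by (rule ne)
        qed
        then obtain z' where z': "z' \<in> \<phi> ` Line x0 y0" "sc c w + y \<in> V.span {z'}" by (rule bexE)
        obtain z where z: "z' = \<phi> z" "z \<in> Line x0 y0" using z'(1) by (rule imageE)
        have "z \<in> E" using z(2) line_sub by blast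
        then show ?thesis using z'(2) z(1) by blast
      qed
    qed
  qed
qed

end

locale pgiso = rep M \<phi> for M :: "'a matroid" and \<phi> :: "'a \<Rightarrow> nat \<Rightarrow> 'f::{field,finite}" +
  fixes r :: nat and bb :: "nat \<Rightarrow> nat \<Rightarrow> 'f" and B :: "(nat \<Rightarrow> 'f) set"
  assumes full: "\<And>x y. x \<in> gnd M \<Longrightarrow> y \<in> gnd M \<Longrightarrow> x \<noteq> y \<Longrightarrow> card (Line x y) = Suc (card (UNIV :: 'f set))"
    and r1: "1 \<le> r"
    and bbB: "bij_betw bb {..<r} B"
    and Bind: "V.independent B"
    and BE: "B \<subseteq> \<phi> ` gnd M"
    and EB: "\<phi> ` gnd M \<subseteq> V.span B"
begin

definition T :: "(nat \<Rightarrow> 'f) \<Rightarrow> (nat \<Rightarrow> 'f)" where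
  "T v = (\<lambda>i. if i < r then V.representation B v (bb i) else 0)"

definition Lam :: "(nat \<Rightarrow> 'f) \<Rightarrow> (nat \<Rightarrow> 'f)" where
  "Lam w = (\<Sum>i<r. sc (w i) (bb i))"

lemma finB: "finite B"
  using bbB bij_betw_finite by blast

lemma bb_in: "i < r \<Longrightarrow> bb i \<in> B"
  using bbB by (auto simp: bij_betw_def)

lemma bb_inj: "i < r \<Longrightarrow> j < r \<Longrightarrow> bb i = bb j \<Longrightarrow> i = j"
  using bbB by (auto simp: bij_betw_def dest: inj_onD)

lemma Lam_apply: "Lam w k = (\<Sum>i<r. w i * bb i k)"
  by (simp add: Lam_def sum_fun_apply)

lemma Lam_sum: "Lam (\<Sum>y\<in>Y. sc (c y) (g y)) = (\<Sum>y\<in>Y. sc (c y) (Lam (g y)))"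
proof (rule ext)
  fix k
  have "Lam (\<Sum>y\<in>Y. sc (c y) (g y)) k = (\<Sum>i<r. (\<Sum>y\<in>Y. c y * g y i) * bb i k)"
    by (simp add: Lam_apply sum_fun_apply)
  also have "\<dots> = (\<Sum>i<r. \<Sum>y\<in>Y. c y * (g y i * bb i k))"
    by (simp add: sum_distrib_right mult.assoc)
  also have "\<dots> = (\<Sum>y\<in>Y. \<Sum>i<r. c y * (g y i * bb i k))"
    by (rule sum.swap)
  also have "\<dots> = (\<Sum>y\<in>Y. sc (c y) (Lam (g y))) k"
    by (simp add: Lam_apply sum_fun_apply sum_distrib_left)
  finally show "Lam (\<Sum>y\<in>Y. sc (c y) (g y)) k = (\<Sum>y\<in>Y. sc (c y) (Lam (g y))) k" .
qed

lemma Lam_sc: "Lam (sc c w) = sc c (Lam w)"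
  by (rule ext) (simp add: Lam_apply sum_distrib_left mult.assoc)

lemma Lam_zero: "Lam 0 = 0"
  by (rule ext) (simp add: Lam_apply)

lemma Lam_span: "Lam w \<in> V.span B"
  unfolding Lam_def by (intro V.span_sum V.span_scale V.span_base bb_in) simp

lemma T_supp: "r \<le> i \<Longrightarrow> T v i = 0"
  by (simp add: T_def)

lemma Lam_T: assumes "v \<in> V.span B" shows "Lam (T v) = v"
proof -
  have "Lam (T v) = (\<Sum>i<r. sc (V.representation B v (bb i)) (bb i))"
    unfolding Lam_def T_def by simp
  also have "\<dots> = (\<Sum>b\<in>B. sc (V.representation B v b) b)"
    by (rule sum.reindex_bij_betw[OF bbB])
  also have "\<dots> = v" by (rule V.sum_representation_eq[OF Bind assms finB subset_refl])
  finally show ?thesis .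
qed

lemma T_sc: assumes "v \<in> V.span B" shows "T (sc c v) = sc c (T v)"
  using V.representation_scale[OF Bind assms] by (simp add: T_def fun_eq_iff)

lemma T_Lam: assumes supp: "\<And>i. r \<le> i \<Longrightarrow> w i = 0" shows "T (Lam w) = w"
proof (rule ext)
  fix j
  show "T (Lam w) j = w j"
  proof (cases "j < r")
    case False then show ?thesis using supp by (simp add: T_def)
  next
    case True
    have "V.representation B (Lam w) = (\<lambda>b. \<Sum>i<r. V.representation B (sc (w i) (bb i)) b)"
      unfolding Lam_def
      by (rule V.representation_sum[OF Bind]) (intro V.span_scale V.span_base bb_in, simp)
    also have "\<dots> = (\<lambda>b. \<Sum>i<r. w i * V.representation B (bb i) b)"
      by (intro ext sum.cong HOL.refl)
         (simp add: V.representation_scale[OF Bind V.span_base[OF bb_in]])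
    also have "\<dots> = (\<lambda>b. \<Sum>i<r. w i * (if b = bb i then 1 else 0))"
      by (intro ext sum.cong HOL.refl) (simp add: V.representation_basis[OF Bind bb_in])
    finally have R: "V.representation B (Lam w) (bb j) = (\<Sum>i<r. w i * (if bb j = bb i then 1 else 0))"
      by simp
    have "(\<Sum>i<r. w i * (if bb j = bb i then 1 else 0)) = (\<Sum>i<r. if i = j then w i else 0)"
      by (rule sum.cong[OF HOL.refl]) (use bb_inj True in auto)
    also have "\<dots> = w j" using True by simp
    finally show ?thesis using R True by (simp add: T_def)
  qed
qed

lemma T_zero_imp: assumes "\<And>i. r \<le> i \<Longrightarrow> w i = 0" "Lam w = 0" shows "w = 0"
proof -
  have "w = T (Lam w)" using T_Lam[OF assms(1)] by simp
  also have "\<dots> = T 0" using assms(2) by simp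
  also have "\<dots> = 0" by (simp add: T_def V.representation_zero fun_eq_iff)
  finally show ?thesis .
qed

end

context pgiso
begin

definition fmap :: "'a \<Rightarrow> nat \<Rightarrow> 'f" where
  "fmap x = nz (T (\<phi> x))"

definition lam :: "'a \<Rightarrow> 'f" where
  "lam x = inverse (T (\<phi> x) (lead (T (\<phi> x))))"

lemma phiB: "x \<in> E \<Longrightarrow> \<phi> x \<in> V.span B"
  using EB by blast

lemma Tnz: assumes "x \<in> E" shows "T (\<phi> x) \<noteq> 0"
proof
  assume "T (\<phi> x) = 0"
  then have "\<phi> x = Lam 0" using Lam_T[OF phiB[OF assms]] by simp
  then show False using nzE[OF assms] Lam_zero by simp
qed

lemma f_eq: "fmap x = sc (lam x) (T (\<phi> x))"
  by (simp add: fmap_def nz_def lam_def)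

lemma lam_nz: "x \<in> E \<Longrightarrow> lam x \<noteq> 0"
  using lead_nz[OF Tnz] by (simp add: lam_def)

lemma Lam_f: "x \<in> E \<Longrightarrow> Lam (fmap x) = sc (lam x) (\<phi> x)"
  by (simp add: f_eq Lam_sc Lam_T[OF phiB])

lemma f_supp: "r \<le> i \<Longrightarrow> fmap x i = 0"
  by (simp add: f_eq T_supp)

lemma f_PG: assumes "x \<in> E" shows "fmap x \<in> PGg (r - 1)"
  unfolding fmap_def
  by (rule nz_PGg[OF Tnz[OF assms]]) (use r1 T_supp in auto)

lemma f_inj: "inj_on fmap E"
proof (rule inj_onI)
  fix x y assume x: "x \<in> E" and y: "y \<in> E" and e: "fmap x = fmap y"
  have "sc (lam x) (\<phi> x) = sc (lam y) (\<phi> y)" using Lam_f[OF x] Lam_f[OF y] e by simp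
  then have "sc (inverse (lam x)) (sc (lam x) (\<phi> x)) = sc (inverse (lam x)) (sc (lam y) (\<phi> y))" by simp
  then have "\<phi> x = sc (inverse (lam x) * lam y) (\<phi> y)" using lam_nz[OF x] by (simp add: fun_eq_iff)
  then have "\<phi> x \<in> V.span {\<phi> y}" by (simp only: sc_in_span1)
  then show "x = y" using pairE[OF x y] by blast
qed

lemma f_surj: "fmap ` E = PGg (r - 1)"
proof
  show "fmap ` E \<subseteq> PGg (r - 1)" using f_PG by blast
  show "PGg (r - 1) \<subseteq> fmap ` E"
  proof
    fix w :: "nat \<Rightarrow> 'f" assume w: "w \<in> PGg (r - 1)"
    have supp: "\<And>i. r \<le> i \<Longrightarrow> w i = 0" using w r1 by (auto simp: PGg_iff)
    have w0: "w \<noteq> 0" and wl: "w (lead w) = 1" using w by (auto simp: PGg_iff)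
    let ?v = "Lam w"
    have v0: "?v \<noteq> 0"
    proof
      assume h: "?v = 0"
      have "w = 0" using T_zero_imp[of w] supp h by blast
      then show False using w0 by simp
    qed
    have "?v \<in> V.span (\<phi> ` E)" using Lam_span V.span_mono[OF BE] by blast
    then obtain x where x: "x \<in> E" "?v \<in> V.span {\<phi> x}" using closure_full[OF full] v0 by blast
    obtain c where c: "?v = sc c (\<phi> x)" using x(2) by (auto simp: V.span_singleton)
    have c0: "c \<noteq> 0" using c v0 by (auto simp: fun_eq_iff)
    have "w = T ?v" using T_Lam[OF supp] by simp
    also have "\<dots> = sc c (T (\<phi> x))" using c T_sc[OF phiB[OF x(1)]] by simp
    finally have "nz w = nz (T (\<phi> x))" using nz_sc[OF c0] by simp
    then have "fmap x = w" using nz_fix[of w, OF wl] by (simp add: fmap_def)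
    then show "w \<in> fmap ` E" using x(1) by blast
  qed
qed

lemma indep_transfer:
  assumes Y: "Y \<subseteq> E"
  shows "V.independent (fmap ` Y) \<longleftrightarrow> V.independent (\<phi> ` Y)"
proof -
  have finY: "finite Y" using Y finE finite_subset by blast
  have injf: "inj_on fmap Y" using inj_on_subset[OF f_inj Y] .
  have injp: "inj_on \<phi> Y" using inj_on_subset[OF inj_E Y] .
  have key: "(\<Sum>y\<in>Y. sc (c y) (fmap y)) = 0 \<longleftrightarrow> (\<Sum>y\<in>Y. sc (c y * lam y) (\<phi> y)) = 0" for c
  proof -
    have L: "Lam (\<Sum>y\<in>Y. sc (c y) (fmap y)) = (\<Sum>y\<in>Y. sc (c y * lam y) (\<phi> y))"
    proof -
      have "Lam (\<Sum>y\<in>Y. sc (c y) (fmap y)) = (\<Sum>y\<in>Y. sc (c y) (Lam (fmap y)))" by (rule Lam_sum)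
      also have "\<dots> = (\<Sum>y\<in>Y. sc (c y * lam y) (\<phi> y))"
        by (rule sum.cong[OF HOL.refl]) (use Y in \<open>auto simp: Lam_f fun_eq_iff mult.assoc\<close>)
      finally show ?thesis .
    qed
    show ?thesis
    proof
      assume "(\<Sum>y\<in>Y. sc (c y) (fmap y)) = 0"
      then show "(\<Sum>y\<in>Y. sc (c y * lam y) (\<phi> y)) = 0" using L Lam_zero by simp
    next
      assume h: "(\<Sum>y\<in>Y. sc (c y * lam y) (\<phi> y)) = 0"
      show "(\<Sum>y\<in>Y. sc (c y) (fmap y)) = 0"
      proof (rule T_zero_imp)
        show "\<And>i. r \<le> i \<Longrightarrow> (\<Sum>y\<in>Y. sc (c y) (fmap y)) i = 0"
          by (simp add: sum_fun_apply f_supp)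
        show "Lam (\<Sum>y\<in>Y. sc (c y) (fmap y)) = 0" using L h by simp
      qed
    qed
  qed
  have "V.independent (fmap ` Y) \<longleftrightarrow> (\<forall>c. (\<Sum>y\<in>Y. sc (c y * lam y) (\<phi> y)) = 0 \<longrightarrow> (\<forall>y\<in>Y. c y = 0))"
    using indep_image_iff[OF finY injf] key by simp
  also have "\<dots> \<longleftrightarrow> (\<forall>d. (\<Sum>y\<in>Y. sc (d y) (\<phi> y)) = 0 \<longrightarrow> (\<forall>y\<in>Y. d y = 0))"
  proof
    assume h: "\<forall>c. (\<Sum>y\<in>Y. sc (c y * lam y) (\<phi> y)) = 0 \<longrightarrow> (\<forall>y\<in>Y. c y = 0)"
    show "\<forall>d. (\<Sum>y\<in>Y. sc (d y) (\<phi> y)) = 0 \<longrightarrow> (\<forall>y\<in>Y. d y = 0)"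
    proof (intro allI impI ballI)
      fix d y assume s: "(\<Sum>y\<in>Y. sc (d y) (\<phi> y)) = 0" and yY: "y \<in> Y"
      have "(\<Sum>y\<in>Y. sc (d y / lam y * lam y) (\<phi> y)) = (\<Sum>y\<in>Y. sc (d y) (\<phi> y))"
        by (rule sum.cong[OF HOL.refl]) (use Y lam_nz in auto)
      then have "\<forall>y\<in>Y. d y / lam y = 0" using h[rule_format, of "\<lambda>y. d y / lam y"] s by simp
      then show "d y = 0" using yY lam_nz Y by auto
    qed
  next
    assume h: "\<forall>d. (\<Sum>y\<in>Y. sc (d y) (\<phi> y)) = 0 \<longrightarrow> (\<forall>y\<in>Y. d y = 0)"
    show "\<forall>c. (\<Sum>y\<in>Y. sc (c y * lam y) (\<phi> y)) = 0 \<longrightarrow> (\<forall>y\<in>Y. c y = 0)"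
    proof (intro allI impI ballI)
      fix c y assume s: "(\<Sum>y\<in>Y. sc (c y * lam y) (\<phi> y)) = 0" and yY: "y \<in> Y"
      have "\<forall>y\<in>Y. c y * lam y = 0" using h[rule_format, of "\<lambda>y. c y * lam y"] s by simp
      then show "c y = 0" using yY lam_nz Y by auto
    qed
  qed
  also have "\<dots> \<longleftrightarrow> V.independent (\<phi> ` Y)" using indep_image_iff[OF finY injp] by simp
  finally show ?thesis .
qed

lemma vrank_f:
  assumes X: "X \<subseteq> E"
  shows "vrank id (fmap ` X) = vrank \<phi> X"
proof -
  have "{card Z | Z. Z \<subseteq> fmap ` X \<and> finite Z \<and> inj_on id Z \<and> lin_indep (id ` Z)} =
        {card Y | Y. Y \<subseteq> X \<and> finite Y \<and> inj_on \<phi> Y \<and> lin_indep (\<phi> ` Y)}"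
  proof (intro set_eqI iffI)
    fix n assume "n \<in> {card Z | Z. Z \<subseteq> fmap ` X \<and> finite Z \<and> inj_on id Z \<and> lin_indep (id ` Z)}"
    then obtain Z where Z: "n = card Z" "Z \<subseteq> fmap ` X" "lin_indep Z" by auto
    define Y where "Y = {x \<in> X. fmap x \<in> Z}"
    have YE: "Y \<subseteq> E" using X by (auto simp: Y_def)
    have fY: "fmap ` Y = Z" using Z(2) by (auto simp: Y_def)
    have finY: "finite Y" using YE finE finite_subset by blast
    have cY: "card Y = card Z" using card_image[OF inj_on_subset[OF f_inj YE]] fY by simp
    have "V.independent (\<phi> ` Y)" using indep_transfer[OF YE] Z(3) fY by (simp add: lin_indep_iff)
    moreover have "Y \<subseteq> X" by (auto simp: Y_def)
    ultimately show "n \<in> {card Y | Y. Y \<subseteq> X \<and> finite Y \<and> inj_on \<phi> Y \<and> lin_indep (\<phi> ` Y)}"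
      using Z(1) cY finY inj_on_subset[OF inj_E YE] unfolding lin_indep_iff
      by (intro CollectI exI[of _ Y]) auto
  next
    fix n assume "n \<in> {card Y | Y. Y \<subseteq> X \<and> finite Y \<and> inj_on \<phi> Y \<and> lin_indep (\<phi> ` Y)}"
    then obtain Y where Y: "n = card Y" "Y \<subseteq> X" "lin_indep (\<phi> ` Y)" by auto
    have YE: "Y \<subseteq> E" using Y(2) X by blast
    have finY: "finite Y" using YE finE finite_subset by blast
    have cY: "card (fmap ` Y) = card Y" using card_image[OF inj_on_subset[OF f_inj YE]] .
    have "V.independent (fmap ` Y)" using indep_transfer[OF YE] Y(3) by (simp add: lin_indep_iff)
    then show "n \<in> {card Z | Z. Z \<subseteq> fmap ` X \<and> finite Z \<and> inj_on id Z \<and> lin_indep (id ` Z)}"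
      using Y(1,2) cY finY by (auto simp: lin_indep_iff intro!: exI[of _ "fmap ` Y"])
  qed
  then show ?thesis by (simp add: vrank_def)
qed

lemma iso_PG: "iso M (PG (r - 1) TYPE('f))"
  unfolding iso_def PG_gnd PG_rk
proof (intro exI conjI allI impI)
  show "bij_betw fmap E (PGg (r - 1))" using f_inj f_surj by (simp add: bij_betw_def)
  fix X assume "X \<subseteq> E"
  then show "vrank id (fmap ` X) = rk M X" using vrank_f rkE by simp
qed

end

lemma iso_uniform:
  assumes fin: "finite F" and rkF: "\<And>X. X \<subseteq> F \<Longrightarrow> rk M X = min k (card X)"
  shows "iso (restrict M F) (uniform k (card F))"
proof -
  obtain h where h: "bij_betw h F {0..<card F}" using ex_bij_betw_finite_nat[OF fin] by blast
  show ?thesis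
    unfolding iso_def restr_gnd restr_rk
  proof (intro exI conjI allI impI)
    show "bij_betw h F (gnd (uniform k (card F)))" using h by (simp add: uniform_def gnd_def)
    fix X assume X: "X \<subseteq> F"
    have "card (h ` X) = card X"
      using card_image[OF inj_on_subset[OF bij_betw_imp_inj_on[OF h] X]] .
    then show "rk (uniform k (card F)) (h ` X) = rk M X"
      using rkF[OF X] by (simp add: uniform_def rk_def)
  qed
qed

lemma flat_minor:
  assumes "F \<subseteq> gnd M" "\<And>e. e \<in> gnd M - F \<Longrightarrow> rk M F < rk M (insert e F)"
  shows "induced_minor M (restrict M F)"
proof (rule induced_minor.flat[OF induced_minor.refl])
  show "is_flat M F" using assms by (simp add: is_flat_def)
qed

context rep
begin

lemma line_minor:
  assumes "x \<in> E" "y \<in> E" "x \<noteq> y"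
  shows "induced_minor M (restrict M (Line x y))" "iso (restrict M (Line x y)) (uniform 2 (card (Line x y)))"
proof -
  have c2: "2 \<le> card (Line x y)" by (rule line_card(1)[OF assms])
  have rkL: "rk M X = min 2 (card X)" if "X \<subseteq> Line x y" for X
  proof -
    have "X \<subseteq> E" using that line_sub by blast
    then have "rk M X = vrank \<phi> X" by (rule rkE)
    then show ?thesis using vrank_line[OF assms that] by simp
  qed
  show "iso (restrict M (Line x y)) (uniform 2 (card (Line x y)))"
    by (rule iso_uniform[OF line_fin rkL])
  show "induced_minor M (restrict M (Line x y))"
  proof (rule flat_minor[OF line_sub])
    fix e assume e: "e \<in> E - Line x y"
    have "rk M (Line x y) = 2" using rkL[of "Line x y"] c2 by simp
    moreover have "vrank \<phi> {x, y, e} = 3" using vrank_xyz[OF assms, of e] e by simp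
    moreover have "vrank \<phi> {x, y, e} \<le> vrank \<phi> (insert e (Line x y))"
      by (rule vrank_mono) (use line_fin line_mem[OF assms(1,2)] in auto)
    moreover have "insert e (Line x y) \<subseteq> E" using e line_sub by blast
    then have "rk M (insert e (Line x y)) = vrank \<phi> (insert e (Line x y))" by (rule rkE)
    ultimately show "rk M (Line x y) < rk M (insert e (Line x y))" by simp
  qed
qed

lemma vrank_small:
  assumes "X \<subseteq> E" "card X \<le> 2" "finite X"
  shows "vrank \<phi> X = card X"
proof -
  consider "card X = 0" | "card X = 1" | "card X = 2" using assms(2) by linarith
  then show ?thesis
  proof cases
    case 1 then show ?thesis using vrank_le_card[OF assms(3), of \<phi>] by simp
  next
    case 2
    then obtain u where u: "X = {u}" by (rule card_1_singletonE)
    then have "u \<in> E" using assms(1) by simp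
    then show ?thesis using vrank_single u by simp
  next
    case 3
    then obtain u v where uv: "X = {u, v}" "u \<noteq> v" by (meson card_2_iff)
    then have "u \<in> E" "v \<in> E" using assms(1) by auto
    then show ?thesis using vrank_pair uv by simp
  qed
qed

end

context plane
begin

lemma plane_minor:
  assumes all2: "\<forall>ln\<in>LP. card ln = 2"
  shows "induced_minor M (restrict M P)" "iso (restrict M P) (uniform 3 (card P))"
proof -
  have rkP: "rk M X = min 3 (card X)" if X: "X \<subseteq> P" for X
  proof -
    have XE: "X \<subseteq> E" using X plane_sub by blast
    have finX: "finite X" using X P_fin finite_subset by blast
    have "vrank \<phi> X = min 3 (card X)"
    proof (cases "card X \<le> 2")
      case True then show ?thesis using vrank_small[OF XE True finX] by simp
    next
      case False
      then obtain u v w where uvw: "u \<in> X" "v \<in> X" "w \<in> X" "u \<noteq> v" "w \<noteq> u" "w \<noteq> v"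
      proof -
        have "3 \<le> card X" using False by simp
        then obtain Y where Y: "Y \<subseteq> X" "card Y = 3" by (rule obtain_subset_with_card_n)
        then obtain u v w where uvw0: "Y = {u, v, w}" "u \<noteq> v" "v \<noteq> w" "u \<noteq> w"
          using card_3_iff by meson
        have "u \<in> X" "v \<in> X" "w \<in> X" using Y(1) uvw0(1) by auto
        then show ?thesis using that uvw0(2-4) by simp
      qed
      have uvE: "u \<in> E" "v \<in> E" "w \<in> E" using uvw XE by auto
      have lLP: "Line u v \<in> LP" unfolding LP_def using uvw X by blast
      have "Line u v = {u, v}"
      proof (rule card_seteq[symmetric])
        show "finite (Line u v)" by (rule line_fin)
        show "{u, v} \<subseteq> Line u v" using line_mem[OF uvE(1,2)] by auto
        show "card (Line u v) \<le> card {u, v}" using all2 lLP uvw(4) by simp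
      qed
      then have "w \<notin> Line u v" using uvw by auto
      then have "vrank \<phi> {u, v, w} = 3" using vrank_xyz[OF uvE(1,2) uvw(4) uvE(3)] by simp
      moreover have "vrank \<phi> {u, v, w} \<le> vrank \<phi> X" by (rule vrank_mono[OF finX]) (use uvw in auto)
      moreover have "vrank \<phi> X \<le> vrank \<phi> P" by (rule vrank_mono[OF P_fin X])
      ultimately show ?thesis using vrank_P False by simp
    qed
    then show ?thesis using rkE[OF XE] by simp
  qed
  show "iso (restrict M P) (uniform 3 (card P))" by (rule iso_uniform[OF P_fin rkP])
  show "induced_minor M (restrict M P)"
  proof (rule flat_minor[OF plane_sub])
    fix e assume e: "e \<in> E - P"
    have "rk M P = 3" using rkE[OF plane_sub] vrank_P by simp
    moreover have "insert e P \<subseteq> E" using e plane_sub by blast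
    then have "rk M (insert e P) = vrank \<phi> (insert e P)" by (rule rkE)
    ultimately show "rk M P < rk M (insert e P)" using vrank_P_insert[OF e] by simp
  qed
qed

end

theorem lemma3p4:
  fixes M :: "'a matroid" and r :: nat
    and F :: "'f::{field, finite} itself"
  assumes "card (UNIV :: 'f set) > 2"
    and "matroid M" and "simple M" and "representable_over TYPE('f) M"
    and "matroid_rank M = r" and "r \<ge> 3"
    and "\<not> iso M (PG (r - 1) TYPE('f))"
    and "\<forall>e \<in> gnd M. \<exists>S. is_simplification_set (contract M {e}) S \<and>
            iso (restrict (contract M {e}) S) (PG (r - 2) TYPE('f))"
  shows "\<exists>N. induced_minor M N \<and>
           ((\<exists>k. 3 \<le> k \<and> k \<le> card (UNIV :: 'f set) \<and> iso N (uniform 2 k)) \<or>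
            iso N (uniform 3 (card (UNIV :: 'f set) + 2)))"
proof -
  let ?q = "card (UNIV :: 'f set)"
  have q3: "3 \<le> ?q" using assms(1) by simp
  obtain \<phi> :: "'a \<Rightarrow> nat \<Rightarrow> 'f" where \<phi>: "\<And>X. X \<subseteq> gnd M \<Longrightarrow> rk M X = vrank \<phi> X"
    using assms(4) unfolding representable_over_def by blast
  have finE: "finite (gnd M)" using assms(2) by (simp add: matroid_def)
  have nz: "\<phi> x \<noteq> 0" if x: "x \<in> gnd M" for x
  proof -
    have "rk M {x} = 1" using assms(3) x by (simp add: simple_def)
    then have v1: "vrank \<phi> {x} = 1" using \<phi>[of "{x}"] x by simp
    obtain Y where Y: "Y \<subseteq> {x}" "V.independent (\<phi> ` Y)" "card Y = vrank \<phi> {x}"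
      using vrank_obtain[of "{x}" \<phi>] by blast
    have "Y \<noteq> {}" using Y(3) v1 by auto
    then have "Y = {x}" using Y(1) by blast
    then have "V.independent {\<phi> x}" using Y(2) by simp
    then show ?thesis by simp
  qed
  have pr: "\<phi> x \<notin> V.span {\<phi> y}" if xy: "x \<in> gnd M" "y \<in> gnd M" "x \<noteq> y" for x y
  proof -
    have "rk M {x, y} = 2" using assms(3) xy by (simp add: simple_def)
    then have v2: "vrank \<phi> {x, y} = 2" using \<phi>[of "{x, y}"] xy by simp
    obtain Y where Y: "Y \<subseteq> {x, y}" "inj_on \<phi> Y" "V.independent (\<phi> ` Y)" "card Y = vrank \<phi> {x, y}"
      using vrank_obtain[of "{x, y}" \<phi>] by blast
    have "Y = {x, y}"
      by (rule card_seteq) (use Y(1,4) v2 xy(3) in auto)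
    then have "\<phi> x \<noteq> \<phi> y" "V.independent {\<phi> x, \<phi> y}" using Y(2,3) xy(3) by auto
    then show ?thesis using indep2_iff by blast
  qed
  interpret R: rep M \<phi>
    by unfold_locales (use finE \<phi> nz pr in auto)
  have rE: "vrank \<phi> (gnd M) = r" using assms(5) \<phi>[of "gnd M"] by (simp add: matroid_rank_def)
  show ?thesis
  proof (cases "\<forall>x\<in>gnd M. \<forall>y\<in>gnd M. x \<noteq> y \<longrightarrow> card (R.Line x y) = Suc ?q")
    case True
    obtain Y0 where Y0: "Y0 \<subseteq> gnd M" "inj_on \<phi> Y0" "V.independent (\<phi> ` Y0)" "card Y0 = vrank \<phi> (gnd M)"
      using vrank_obtain[OF finE] by blast
    define B where "B = \<phi> ` Y0"
    have finB: "finite B" unfolding B_def using Y0(1) finE finite_subset by blast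
    have cB: "card B = r" unfolding B_def using card_image[OF Y0(2)] Y0(4) rE by simp
    obtain bb where bb0: "bij_betw bb {0..<card B} B" using ex_bij_betw_nat_finite[OF finB] by blast
    have bb: "bij_betw bb {..<r} B" using bb0 cB by (simp add: atLeast0LessThan)
    have EB: "\<phi> ` gnd M \<subseteq> V.span B"
    proof
      fix v assume "v \<in> \<phi> ` gnd M"
      then obtain x where x: "x \<in> gnd M" "v = \<phi> x" by blast
      show "v \<in> V.span B"
      proof (rule ccontr)
        assume n: "v \<notin> V.span B"
        have xB: "\<phi> x \<notin> B" using n x(2) V.span_base by blast
        then have xY: "x \<notin> Y0" unfolding B_def by blast
        have ind: "V.independent (\<phi> ` insert x Y0)"
          using V.independent_insertI[of "\<phi> x" B] n x(2) Y0(3) unfolding B_def by simp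
        have inj: "inj_on \<phi> (insert x Y0)" using Y0(2) xB xY unfolding B_def by simp
        have "card (insert x Y0) \<le> vrank \<phi> (gnd M)"
          by (rule vrank_ge[OF finE _ inj ind]) (use x Y0(1) in auto)
        moreover have "card (insert x Y0) = Suc (card Y0)"
          using xY Y0(1) finE finite_subset by (metis card_insert_disjoint)
        ultimately show False using Y0(4) by simp
      qed
    qed
    interpret G: pgiso M \<phi> r bb B
    proof unfold_locales
      show "\<And>x y. x \<in> gnd M \<Longrightarrow> y \<in> gnd M \<Longrightarrow> x \<noteq> y \<Longrightarrow> card (R.Line x y) = Suc ?q"
        using True by blast
      show "1 \<le> r" using assms(6) by simp
      show "bij_betw bb {..<r} B" by (rule bb)
      show "V.independent B" using Y0(3) by (simp add: B_def)
      show "B \<subseteq> \<phi> ` gnd M" using Y0(1) by (auto simp: B_def)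
      show "\<phi> ` gnd M \<subseteq> V.span B" by (rule EB)
    qed
    have "iso M (PG (r - 1) TYPE('f))" by (rule G.iso_PG)
    then show ?thesis using assms(7) by simp
  next
    case False
    then obtain x y where xy: "x \<in> gnd M" "y \<in> gnd M" "x \<noteq> y" "card (R.Line x y) \<noteq> Suc ?q"
      by blast
    show ?thesis
    proof (cases "\<exists>u\<in>gnd M. \<exists>v\<in>gnd M. u \<noteq> v \<and> 3 \<le> card (R.Line u v) \<and> card (R.Line u v) \<le> ?q")
      case True
      then obtain u v where uv: "u \<in> gnd M" "v \<in> gnd M" "u \<noteq> v" "3 \<le> card (R.Line u v)" "card (R.Line u v) \<le> ?q"
        by blast
      show ?thesis
        using R.line_minor[OF uv(1-3)] uv(4,5) by blast
    next
      case False
      have allL: "card (R.Line u v) = 2 \<or> card (R.Line u v) = Suc ?q"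
        if "u \<in> gnd M" "v \<in> gnd M" "u \<noteq> v" for u v
        using R.line_card[OF that] False that by fastforce
      have c2: "card (R.Line x y) = 2" using allL[OF xy(1-3)] xy(4) by simp
      have "\<exists>z. z \<in> gnd M \<and> \<phi> z \<notin> V.span {\<phi> x, \<phi> y}"
      proof (rule ccontr)
        assume "\<nexists>z. z \<in> gnd M \<and> \<phi> z \<notin> V.span {\<phi> x, \<phi> y}"
        then have "\<phi> ` gnd M \<subseteq> V.span {\<phi> x, \<phi> y}" by blast
        then have "vrank \<phi> (gnd M) \<le> card {\<phi> x, \<phi> y}" by (rule vrank_le_span[OF finE]) simp
        moreover have "card {\<phi> x, \<phi> y} \<le> 2" by (simp add: card_insert_if)
        ultimately show False using rE assms(6) by simp
      qed
      then obtain z where z: "z \<in> gnd M" "\<phi> z \<notin> V.span {\<phi> x, \<phi> y}" by blast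
      interpret Pl: plane M \<phi> x y z
        by unfold_locales (use xy z in auto)
      have H1: "\<forall>ln\<in>Pl.LP. card ln = 2 \<or> card ln = Suc ?q"
      proof
        fix ln assume "ln \<in> Pl.LP"
        then obtain u v where uv: "u \<in> Pl.P" "v \<in> Pl.P" "u \<noteq> v" "ln = R.Line u v" by (rule Pl.LP_elem)
        then show "card ln = 2 \<or> card ln = Suc ?q" using allL[OF Pl.P_E Pl.P_E] by simp
      qed
      have H2: "\<forall>p\<in>Pl.P. card (R.LT p Pl.P) = Suc ?q"
      proof
        fix p assume p: "p \<in> Pl.P"
        then have "p \<in> gnd M" by (rule Pl.P_E)
        then obtain S where S: "is_simplification_set (contract M {p}) S"
          "iso (restrict (contract M {p}) S) (PG (r - 2) TYPE('f))" using assms(8) by blast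
        show "card (R.LT p Pl.P) = Suc ?q" by (rule Pl.LT_card[OF p S])
      qed
      have main: "\<forall>ln\<in>Pl.LP. card ln = 2" "card Pl.P = ?q + 2"
        using Pl.plane_main[OF q3 H1 H2 c2] by auto
      have "induced_minor M (restrict M Pl.P)" "iso (restrict M Pl.P) (uniform 3 (?q + 2))"
        using Pl.plane_minor[OF main(1)] main(2) by simp_all
      then show ?thesis by blast
    qed
  qed
qed

end
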